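(* Let $(W,W')$ be an exchangeable pair of real random variables and set $\Delta = W-W'$. Suppose that $$E(W-W'\mid W) = g(W) + r(W)$$ for a differentiable function $g:\mathbb{R}\to\mathbb{R}$ and a measurable function $r$. Let $c_0>0$ be a constant, let $G(t)=\int_0^t g(s)\,ds$, assume $\int_{-\infty}^\infty e^{-c_0G(t)}dt<\infty$, let $c_1 = 1/\int_{-\infty}^\infty e^{-c_0 G(t)}\,dt$, and let $Y$ be a random variable with density $p(t)=c_1e^{-c_0G(t)}$. Assume: (H1) $g$ is non-decreasing, $g(t)\ge 0$ for $t>0$ and $g(t)\le 0$ for $t\le 0$; (H3) there is $c_3<\infty$ such that for all $x$, $\min\big(1/c_1, 1/|c_0 g(x)|\big)\,(|x| + 3/c_1)\, c_0|g'(x)| \le c_3$. Assume moreover that $|W-W'|\le \delta$ for a constant $\delta$. Then for all real $z$, $$|P(W\le z) - P(Y\le z)| \le 3E\big|1-(c_0/2)E(\Delta^2\mid W)\big| + c_1\max(1,c_3)\,\delta + \frac{2c_0}{c_1}E|r(W)| + \delta^3 c_0\Big\{\big(2 + \tfrac{c_3}{2}\big)E|c_0 g(W)| + \tfrac{c_1c_3}{2}\Big\}.$$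
   Context: A pair $(W,W')$ is exchangeable if $(W,W')$ and $(W',W)$ have the same joint distribution. In (H3), $1/|c_0g(x)|$ is interpreted as $+\infty$ when $g(x)=0$. *)

theory Defs
  imports "HOL-Probability.Probability"
begin

definition Gfun :: "(real \<Rightarrow> real) \<Rightarrow> real \<Rightarrow> real" where
  "Gfun g t = (LBINT s=0..t. g s)"

text \<open>min(1/c1, 1/|c0 g x|), where 1/|c0 g x| is read as +infinity when g x = 0.\<close>
definition min_inv :: "real \<Rightarrow> real \<Rightarrow> (real \<Rightarrow> real) \<Rightarrow> real \<Rightarrow> real" where
  "min_inv c0 c1 g x = (if g x = 0 then 1 / c1 else min (1 / c1) (1 / \<bar>c0 * g x\<bar>))"

definition exchangeable :: "'a measure \<Rightarrow> ('a \<Rightarrow> real) \<Rightarrow> ('a \<Rightarrow> real) \<Rightarrow> bool" where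
  "exchangeable M W W' \<longleftrightarrow>
     distr M (borel \<Otimes>\<^sub>M borel) (\<lambda>\<omega>. (W \<omega>, W' \<omega>)) = distr M (borel \<Otimes>\<^sub>M borel) (\<lambda>\<omega>. (W' \<omega>, W \<omega>))"

end

theory Submission
  imports Defs
begin


lemma LBINT_deriv:
  fixes f :: "real \<Rightarrow> real" and c x :: real
  assumes cont: "continuous_on UNIV f"
  shows "((\<lambda>u::real. LBINT y=c..u. f y) has_real_derivative f x) (at x)"
proof -
  define a where "a = min c x - 1"
  define b where "b = max c x + 1"
  have "((\<lambda>u::real. LBINT y=c..u. f y) has_vector_derivative f x) (at x within {a..b})"
    by (rule interval_integral_FTC2) (use cont continuous_on_subset in \<open>auto simp: a_def b_def\<close>)
  then have "((\<lambda>u::real. LBINT y=c..u. f y) has_vector_derivative f x) (at x within {a<..<b})"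
    by (rule has_vector_derivative_within_subset) auto
  then have "((\<lambda>u::real. LBINT y=c..u. f y) has_vector_derivative f x) (at x)"
    by (subst (asm) has_vector_derivative_within_open) (auto simp: a_def b_def)
  then show ?thesis by (simp add: has_real_derivative_iff_has_vector_derivative)
qed

lemma mvt_bound:
  fixes f f' :: "real \<Rightarrow> real"
  assumes ab: "a \<le> b" and cont: "continuous_on {a..b} f"
    and der: "\<And>s. a < s \<Longrightarrow> s < b \<Longrightarrow> (f has_real_derivative f' s) (at s)"
    and bd: "\<And>s. a < s \<Longrightarrow> s < b \<Longrightarrow> m \<le> f' s \<and> f' s \<le> M"
  shows "m * (b - a) \<le> f b - f a \<and> f b - f a \<le> M * (b - a)"
proof (cases "a = b")
  case True then show ?thesis by simp
next
  case False
  with ab have lt: "a < b" by simp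
  obtain l \<xi> where \<xi>: "a < \<xi>" "\<xi> < b" "DERIV f \<xi> :> l" and eq: "f b - f a = (b - a) * l"
    using MVT[OF lt cont] der real_differentiable_def by blast
  have "l = f' \<xi>" using DERIV_unique[OF \<xi>(3) der[OF \<xi>(1,2)]] .
  with bd[OF \<xi>(1,2)] have "m \<le> l" "l \<le> M" by auto
  with eq lt show ?thesis by (auto simp: mult.commute intro: mult_right_mono)
qed

lemma mvt_bound_pw:
  fixes f f' :: "real \<Rightarrow> real"
  assumes ab: "a \<le> b" and cont: "continuous_on {a..b} f"
    and der: "\<And>s. a < s \<Longrightarrow> s < b \<Longrightarrow> s \<noteq> z \<Longrightarrow> (f has_real_derivative f' s) (at s)"
    and bd: "\<And>s. a < s \<Longrightarrow> s < b \<Longrightarrow> s \<noteq> z \<Longrightarrow> m \<le> f' s \<and> f' s \<le> M"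
  shows "m * (b - a) \<le> f b - f a \<and> f b - f a \<le> M * (b - a)"
proof (cases "a < z \<and> z < b")
  case True
  have 1: "m * (z - a) \<le> f z - f a \<and> f z - f a \<le> M * (z - a)"
    by (rule mvt_bound[where f'=f']) (use True cont der bd in \<open>auto intro: continuous_on_subset\<close>)
  have 2: "m * (b - z) \<le> f b - f z \<and> f b - f z \<le> M * (b - z)"
    by (rule mvt_bound[where f'=f']) (use True cont der bd in \<open>auto intro: continuous_on_subset\<close>)
  from 1 2 show ?thesis by (auto simp: algebra_simps)
next
  case False
  show ?thesis
    by (rule mvt_bound[where f'=f']) (use False ab cont der bd in auto)
qed

locale dens =
  fixes g :: "real \<Rightarrow> real" and c0 c1 :: real and N :: "'b measure" and Y :: "'b \<Rightarrow> real"
  assumes g_diff: "\<And>x. g differentiable (at x)"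
    and g_mono: "mono g" and g_pos: "\<And>t. t > 0 \<Longrightarrow> g t \<ge> 0" and g_neg: "\<And>t. t \<le> 0 \<Longrightarrow> g t \<le> 0"
    and c0: "c0 > 0"
    and int_fin: "integrable lborel (\<lambda>t. exp (- c0 * Gfun g t))"
    and c1: "c1 = 1 / (\<integral>t. exp (- c0 * Gfun g t) \<partial>lborel)"
    and N: "prob_space N"
    and Y: "distributed N lborel Y (\<lambda>t. ennreal (c1 * exp (- c0 * Gfun g t)))"
begin

definition p where "p t = c1 * exp (- c0 * Gfun g t)"
definition F where "F x = measure N {y \<in> space N. Y y \<le> x}"

lemma g_isCont: "isCont g x"
  using g_diff differentiable_imp_continuous_within by blast

lemma g_cont: "continuous_on UNIV g"
  using g_isCont continuous_at_imp_continuous_on by blast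

lemma g_deriv: "(g has_real_derivative deriv g x) (at x)"
  using g_diff DERIV_deriv_iff_real_differentiable by blast

lemma G_deriv: "(Gfun g has_real_derivative g x) (at x)"
  unfolding Gfun_def using LBINT_deriv[OF g_cont, of 0 x] by (simp add: zero_ereal_def)

lemma g0: "g 0 = 0"
proof -
  have "(g \<longlongrightarrow> g 0) (at_right 0)"
    using g_isCont by (simp add: isCont_def filterlim_at_split)
  moreover have "eventually (\<lambda>t. 0 \<le> g t) (at_right (0::real))"
    by (simp add: eventually_at_filter g_pos)
  ultimately have "0 \<le> g 0"
    by (rule tendsto_lowerbound) simp
  with g_neg[of 0] show ?thesis by simp
qed

lemma g_nonneg: "t \<ge> 0 \<Longrightarrow> g t \<ge> 0"
  using g_pos g0 by (cases "t = 0") auto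

lemma G_cont: "continuous_on S (Gfun g)"
  using G_deriv by (meson DERIV_isCont continuous_at_imp_continuous_on)

lemma G0: "Gfun g 0 = 0"
  by (simp add: Gfun_def interval_lebesgue_integral_def zero_ereal_def einterval_same set_lebesgue_integral_def)

lemma G_nonneg: "Gfun g t \<ge> 0"
proof (cases "t \<ge> 0")
  case True
  have "Gfun g 0 \<le> Gfun g t"
    by (rule deriv_nonneg_imp_mono[OF G_deriv]) (use True g_nonneg in auto)
  then show ?thesis by (simp add: G0)
next
  case False
  have "- Gfun g t \<le> - Gfun g 0"
    by (rule deriv_nonneg_imp_mono[where a=t and b=0 and g="\<lambda>x. - Gfun g x" and g'="\<lambda>x. - g x"])
       (use False g_neg in \<open>auto intro!: derivative_eq_intros G_deriv\<close>)
  then show ?thesis by (simp add: G0)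
qed

lemma int_pos: "(\<integral>t. exp (- c0 * Gfun g t) \<partial>lborel) > 0"
proof -
  have ge: "(\<integral>t. exp (- c0 * Gfun g t) \<partial>lborel) \<ge> 0" by (simp add: integral_nonneg)
  have "(\<integral>t. exp (- c0 * Gfun g t) \<partial>lborel) \<noteq> 0"
  proof
    assume "(\<integral>t. exp (- c0 * Gfun g t) \<partial>lborel) = 0"
    then have "AE x in lborel. exp (- c0 * Gfun g x) = 0"
      using integral_nonneg_eq_0_iff_AE[OF int_fin] by simp
    then have "AE x in (lborel::real measure). False" by simp
    then have "ae_filter (lborel::real measure) = bot" using trivial_limit_def by blast
    then show False by (simp add: ae_filter_eq_bot_iff emeasure_lborel_UNIV)
  qed
  with ge show ?thesis by linarith
qed

lemma c1_pos: "c1 > 0" using int_pos c1 by simp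

lemma p_pos: "p t > 0" using c1_pos by (simp add: p_def)

lemma p_le: "p t \<le> c1"
  using c1_pos G_nonneg c0 by (simp add: p_def mult_nonneg_nonneg)

lemma p0: "p 0 = c1" by (simp add: p_def G0)

lemma p_deriv: "(p has_real_derivative (- c0 * g x * p x)) (at x)"
  unfolding p_def by (auto intro!: derivative_eq_intros G_deriv)

lemma p_cont: "continuous_on S p"
  using p_deriv by (meson DERIV_isCont continuous_at_imp_continuous_on)

lemma p_eq: "p = (\<lambda>t. c1 * exp (- c0 * Gfun g t))" by (simp add: p_def fun_eq_iff)

lemma p_int: "integrable lborel p"
  unfolding p_eq using int_fin by simp

lemma p_meas[measurable]: "p \<in> borel_measurable borel"
  using p_cont[of UNIV] by (rule borel_measurable_continuous_onI)

lemma Y_meas: "Y \<in> borel_measurable N"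
  using distributed_measurable[OF Y] by simp

lemma F_int: "F x = (\<integral>t. indicator {..x} t * p t \<partial>lborel)"
proof -
  have "(\<integral>t. c1 * exp (- c0 * Gfun g t) * indicator {..x} t \<partial>lborel) = (\<integral>y. indicator {..x} (Y y) \<partial>N)"
    by (rule distributed_integral[OF Y]) (use c1_pos in auto)
  also have "(\<lambda>y. indicator {..x} (Y y)) = (indicator (Y -` {..x}) :: 'b \<Rightarrow> real)"
    by (auto simp: fun_eq_iff indicator_def)
  also have "integral\<^sup>L N \<dots> = measure N (Y -` {..x} \<inter> space N)"
    by simp
  also have "Y -` {..x} \<inter> space N = {y \<in> space N. Y y \<le> x}" by auto
  finally show ?thesis by (simp add: F_def p_def mult.commute)
qed

interpretation N: prob_space N by (rule N)

lemma F_cdf: "F x = cdf (distr N borel Y) x"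
  using Y_meas by (simp add: F_def cdf_def measure_distr vimage_def Int_def conj_commute)

lemma F_rd: "real_distribution (distr N borel Y)"
  using Y_meas by simp

lemma F_mono: "x \<le> y \<Longrightarrow> F x \<le> F y"
proof -
  interpret rd: real_distribution "distr N borel Y" by (rule F_rd)
  show "x \<le> y \<Longrightarrow> F x \<le> F y" unfolding F_cdf by (rule rd.cdf_nondecreasing)
qed

lemma F_nonneg: "0 \<le> F x" by (simp add: F_def)
lemma F_le1: "F x \<le> 1" by (simp add: F_def)

lemma F_bot: "(F \<longlongrightarrow> 0) at_bot"
proof -
  interpret rd: real_distribution "distr N borel Y" by (rule F_rd)
  show ?thesis using rd.cdf_lim_at_bot by (simp add: F_cdf[abs_def])
qed

lemma F_top: "(F \<longlongrightarrow> 1) at_top"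
proof -
  interpret rd: real_distribution "distr N borel Y" by (rule F_rd)
  show ?thesis using rd.cdf_lim_at_top_prob by (simp add: F_cdf[abs_def])
qed

lemma F_diff: assumes "a \<le> b" shows "F b - F a = (LBINT t=a..b. p t)"
proof -
  have i1: "integrable lborel (\<lambda>t. indicator {..b} t * p t)"
    using integrable_mult_indicator[OF _ p_int, of "{..b}"] by simp
  have i2: "integrable lborel (\<lambda>t. indicator {..a} t * p t)"
    using integrable_mult_indicator[OF _ p_int, of "{..a}"] by simp
  have "F b - F a = (\<integral>t. indicator {..b} t * p t - indicator {..a} t * p t \<partial>lborel)"
    unfolding F_int by (rule Bochner_Integration.integral_diff[OF i1 i2, symmetric])
  also have "\<dots> = (\<integral>t. indicator {a<..b} t * p t \<partial>lborel)"
    by (rule Bochner_Integration.integral_cong) (use assms in \<open>auto simp: indicator_def\<close>)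
  also have "\<dots> = (LBINT t=a..b. p t)"
    by (simp add: interval_integral_Ioc[OF assms] set_lebesgue_integral_def)
  finally show ?thesis .
qed

lemma F_eq: "F x = F 0 + (LBINT t=ereal 0..ereal x. p t)"
proof (cases "0 \<le> x")
  case True then show ?thesis using F_diff[OF True] by simp
next
  case False
  have A: "F 0 - F x = (LBINT t=ereal x..ereal 0. p t)" using F_diff[of x 0] False by simp
  have B: "(LBINT t=ereal 0..ereal x. p t) = -(LBINT t=ereal x..ereal 0. p t)"
    by (rule interval_integral_endpoints_reverse)
  show ?thesis using A B by linarith
qed

lemma F_deriv: "(F has_real_derivative p x) (at x)"
proof -
  have D: "((\<lambda>u::real. F 0 + (LBINT y=ereal 0..ereal u. p y)) has_real_derivative 0 + p x) (at x)"
    by (rule DERIV_add[OF DERIV_const LBINT_deriv[OF p_cont]])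
  have E: "(\<lambda>u::real. F 0 + (LBINT y=ereal 0..ereal u. p y)) = F"
    by (rule ext) (rule F_eq[symmetric])
  show ?thesis using D unfolding E by simp
qed

lemma F_cont: "continuous_on S F"
  using F_deriv by (meson DERIV_isCont continuous_at_imp_continuous_on)

lemma p_ne0: "p t \<noteq> 0" using p_pos[of t] by simp

lemma mills_neg: assumes x: "x \<le> 0" shows "c0 * (- g x) * F x \<le> p x"
proof -
  have key: "c0 * (- g x) * (F x - F a) \<le> p x - p a" if a: "a \<le> x" for a
  proof -
    define \<psi> where "\<psi> b = c0 * (- g x) * (F x - F b) - (p x - p b)" for b
    have "\<psi> a \<le> \<psi> x"
    proof (rule deriv_nonneg_imp_mono[where g=\<psi> and g'="\<lambda>b. c0 * p b * (g x - g b)"])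
      fix b assume "b \<in> {a..x}"
      show "(\<psi> has_real_derivative c0 * p b * (g x - g b)) (at b)"
        unfolding \<psi>_def by (auto intro!: derivative_eq_intros F_deriv p_deriv simp: algebra_simps)
      have "g b \<le> g x" using \<open>b \<in> {a..x}\<close> g_mono by (auto simp: mono_def)
      then show "0 \<le> c0 * p b * (g x - g b)" using c0 p_pos[of b] by simp
    qed (rule a)
    then show ?thesis by (simp add: \<psi>_def)
  qed
  have "c0 * (- g x) * F x \<le> p x + c0 * (- g x) * 0"
  proof (rule tendsto_le[where F=at_bot and f="\<lambda>a. p x + c0 * (- g x) * F a"])
    show "((\<lambda>a. p x + c0 * (- g x) * F a) \<longlongrightarrow> p x + c0 * (- g x) * 0) at_bot"
      by (intro tendsto_intros F_bot)
    show "((\<lambda>a. c0 * (- g x) * F x) \<longlongrightarrow> c0 * (- g x) * F x) at_bot" by simp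
    show "\<forall>\<^sub>F a in at_bot. c0 * (- g x) * F x \<le> p x + c0 * (- g x) * F a"
      unfolding eventually_at_bot_linorder
    proof (rule exI[of _ x], intro allI impI)
      fix a assume "a \<le> x"
      from key[OF this] p_pos[of a] show "c0 * (- g x) * F x \<le> p x + c0 * (- g x) * F a"
        by (simp add: algebra_simps)
    qed
  qed simp
  then show ?thesis by simp
qed

lemma mills_pos: assumes x: "0 \<le> x" shows "c0 * g x * (1 - F x) \<le> p x"
proof -
  have key: "c0 * g x * (F b - F x) \<le> p x - p b" if b: "x \<le> b" for b
  proof -
    define \<psi> where "\<psi> b = p x - p b - c0 * g x * (F b - F x)" for b
    have "\<psi> x \<le> \<psi> b"
    proof (rule deriv_nonneg_imp_mono[where g=\<psi> and g'="\<lambda>b. c0 * p b * (g b - g x)"])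
      fix t assume "t \<in> {x..b}"
      show "(\<psi> has_real_derivative c0 * p t * (g t - g x)) (at t)"
        unfolding \<psi>_def by (auto intro!: derivative_eq_intros F_deriv p_deriv simp: algebra_simps)
      have "g x \<le> g t" using \<open>t \<in> {x..b}\<close> g_mono by (auto simp: mono_def)
      then show "0 \<le> c0 * p t * (g t - g x)" using c0 p_pos[of t] by simp
    qed (rule b)
    then show ?thesis by (simp add: \<psi>_def)
  qed
  have "c0 * g x * (1 - F x) \<le> p x"
  proof (rule tendsto_le[where F=at_top and f="\<lambda>b. p x" and g="\<lambda>b. c0 * g x * (F b - F x)"])
    show "((\<lambda>b. c0 * g x * (F b - F x)) \<longlongrightarrow> c0 * g x * (1 - F x)) at_top"
      by (intro tendsto_intros F_top)
    show "\<forall>\<^sub>F b in at_top. c0 * g x * (F b - F x) \<le> p x"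
      unfolding eventually_at_top_linorder
    proof (rule exI[of _ x], intro allI impI)
      fix b assume "x \<le> b"
      from key[OF this] p_pos[of b] show "c0 * g x * (F b - F x) \<le> p x"
        by linarith
    qed
  qed simp_all
  then show ?thesis .
qed

lemma ratio_neg: assumes x: "x \<le> 0" shows "F x / p x \<le> F 0 / c1"
proof -
  have "F x / p x \<le> F 0 / p 0"
  proof (rule deriv_nonneg_imp_mono[where g="\<lambda>t. F t / p t" and g'="\<lambda>t. 1 + c0 * g t * F t / p t"])
    fix t assume t: "t \<in> {x..0}"
    show "((\<lambda>t. F t / p t) has_real_derivative 1 + c0 * g t * F t / p t) (at t)"
      by (auto intro!: derivative_eq_intros F_deriv p_deriv simp: p_ne0 field_simps power2_eq_square)
    have "c0 * (- g t) * F t \<le> p t" using t mills_neg by simp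
    then have "c0 * (- g t) * F t / p t \<le> p t / p t" using p_pos[of t] by (intro divide_right_mono) auto
    moreover have "p t / p t = 1" using p_ne0[of t] by simp
    moreover have "c0 * g t * F t / p t = - (c0 * (- g t) * F t / p t)" by simp
    ultimately show "0 \<le> 1 + c0 * g t * F t / p t" by linarith
  qed (rule x)
  then show ?thesis by (simp add: p0)
qed

lemma ratio_pos: assumes x: "0 \<le> x" shows "(1 - F x) / p x \<le> (1 - F 0) / c1"
proof -
  have "- ((1 - F 0) / p 0) \<le> - ((1 - F x) / p x)"
  proof (rule deriv_nonneg_imp_mono[where g="\<lambda>t. - ((1 - F t) / p t)" and g'="\<lambda>t. 1 - c0 * g t * (1 - F t) / p t"])
    fix t assume t: "t \<in> {0..x}"
    show "((\<lambda>t. - ((1 - F t) / p t)) has_real_derivative 1 - c0 * g t * (1 - F t) / p t) (at t)"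
      by (auto intro!: derivative_eq_intros F_deriv p_deriv simp: p_ne0 field_simps power2_eq_square)
    have "c0 * g t * (1 - F t) \<le> p t" using t mills_pos by simp
    then have "c0 * g t * (1 - F t) / p t \<le> 1" using p_pos[of t] by simp
    then show "0 \<le> 1 - c0 * g t * (1 - F t) / p t" by simp
  qed (rule x)
  then show ?thesis by (simp add: p0)
qed

definition fs where "fs z x = (F (min x z) - F z * F x) / p x"
definition K where "K z x = c0 * g x * fs z x"
definition hz :: "real \<Rightarrow> real \<Rightarrow> real" where "hz z x = (if x \<le> z then 1 else 0)"
definition A where "A x = (if x \<le> 0 then F x / p x else (1 - F x) / p x)"

lemma A_le: "A x \<le> 1 / c1"
proof (cases "x \<le> 0")
  case True
  then have "A x \<le> F 0 / c1" using ratio_neg by (simp add: A_def)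
  also have "\<dots> \<le> 1 / c1" using F_le1[of 0] c1_pos by (simp add: divide_right_mono)
  finally show ?thesis .
next
  case False
  then have "A x \<le> (1 - F 0) / c1" using ratio_pos by (simp add: A_def)
  also have "\<dots> \<le> 1 / c1" using F_nonneg[of 0] c1_pos by (simp add: divide_right_mono)
  finally show ?thesis .
qed

lemma gA_le: "c0 * \<bar>g x\<bar> * A x \<le> 1"
proof (cases "x \<le> 0")
  case True
  then have "c0 * \<bar>g x\<bar> * A x = c0 * (- g x) * F x / p x"
    using g_neg[of x] by (simp add: A_def)
  also have "\<dots> \<le> p x / p x" using mills_neg[OF True] p_pos[of x] by (intro divide_right_mono) auto
  finally show ?thesis using p_ne0[of x] by simp
next
  case False
  then have "c0 * \<bar>g x\<bar> * A x = c0 * g x * (1 - F x) / p x"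
    using g_pos[of x] by (simp add: A_def)
  also have "\<dots> \<le> p x / p x" using mills_pos[of x] False p_pos[of x] by (intro divide_right_mono) auto
  finally show ?thesis using p_ne0[of x] by simp
qed

lemma fs_nonneg: "0 \<le> fs z x"
proof -
  have "0 \<le> F (min x z) - F z * F x"
  proof (cases "x \<le> z")
    case True
    then have "F (min x z) - F z * F x = F x * (1 - F z)" by (simp add: algebra_simps)
    then show ?thesis using F_nonneg[of x] F_le1[of z] by simp
  next
    case False
    then have "F (min x z) - F z * F x = F z * (1 - F x)" by (simp add: algebra_simps)
    then show ?thesis using F_nonneg[of z] F_le1[of x] by simp
  qed
  then show ?thesis using p_pos[of x] by (simp add: fs_def)
qed

lemma fs_le_A: "fs z x \<le> A x"
proof -
  have num: "F (min x z) - F z * F x \<le> (if x \<le> 0 then F x else 1 - F x)"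
  proof (cases "x \<le> z")
    case True
    then have e: "F (min x z) - F z * F x = F x * (1 - F z)" by (simp add: algebra_simps)
    have le: "F x \<le> F z" using F_mono True by simp
    have m1: "F x * F x \<le> F x * F z" using le F_nonneg[of x] by (rule mult_left_mono)
    have m2: "0 \<le> (1 - F x) * (1 - F x)" by simp
    have m3: "F x * F z \<le> F x" using F_nonneg[of x] F_le1[of z] by (simp add: mult_left_le)
    have m4: "0 \<le> F x * F z" using F_nonneg[of x] F_nonneg[of z] by simp
    show ?thesis unfolding e using m1 m2 m3 m4 F_nonneg[of x]
      by (auto simp: algebra_simps)
  next
    case False
    then have e: "F (min x z) - F z * F x = F z * (1 - F x)" by (simp add: algebra_simps)
    have "F z \<le> F x" using F_mono False by simp
    moreover have "0 \<le> F x * F z" using F_nonneg[of x] F_nonneg[of z] by simp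
    moreover have "0 \<le> (1 - F z) * (1 - F x)" using F_le1[of x] F_le1[of z] by simp
    ultimately show ?thesis unfolding e by (auto simp: algebra_simps)
  qed
  show ?thesis using divide_right_mono[OF num less_imp_le[OF p_pos[of x]]]
    by (auto simp: fs_def A_def split: if_splits)
qed

lemma fs_le: "fs z x \<le> 1 / c1" using fs_le_A A_le order.trans by blast

lemma K_le: "\<bar>K z x\<bar> \<le> 1"
proof -
  have "\<bar>K z x\<bar> = c0 * \<bar>g x\<bar> * fs z x" using fs_nonneg c0 by (simp add: K_def abs_mult)
  also have "\<dots> \<le> c0 * \<bar>g x\<bar> * A x" using fs_le_A c0 by (simp add: mult_left_mono)
  also have "\<dots> \<le> 1" by (rule gA_le)
  finally show ?thesis .
qed

lemma fs_cont: "continuous_on S (fs z)"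
proof -
  have "continuous_on UNIV (\<lambda>x. F (min x z))"
    by (rule continuous_on_compose2[OF F_cont[of UNIV]]) (auto intro!: continuous_intros)
  then have "continuous_on UNIV (fs z)"
    unfolding fs_def[abs_def] by (auto intro!: continuous_intros F_cont p_cont p_ne0)
  then show ?thesis using continuous_on_subset by blast
qed

lemma fs_deriv: assumes "x \<noteq> z" shows "(fs z has_real_derivative (K z x + hz z x - F z)) (at x)"
proof (cases "x < z")
  case True
  have d: "((\<lambda>y. (1 - F z) * F y / p y) has_real_derivative (K z x + hz z x - F z)) (at x)"
    using True by (auto intro!: derivative_eq_intros F_deriv p_deriv
        simp: p_ne0 field_simps power2_eq_square K_def fs_def hz_def)
  show ?thesis
    by (rule has_field_derivative_transform_within_open[OF d, of "{..<z}"])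
       (use True in \<open>auto simp: fs_def algebra_simps\<close>)
next
  case False
  with assms have lt: "z < x" by simp
  have d: "((\<lambda>y. F z * (1 - F y) / p y) has_real_derivative (K z x + hz z x - F z)) (at x)"
    using lt by (auto intro!: derivative_eq_intros F_deriv p_deriv
        simp: p_ne0 field_simps power2_eq_square K_def fs_def hz_def)
  show ?thesis
    by (rule has_field_derivative_transform_within_open[OF d, of "{z<..}"])
       (use lt in \<open>auto simp: fs_def algebra_simps\<close>)
qed

lemma fs_lip: "\<bar>fs z s - fs z w\<bar> \<le> 2 * \<bar>s - w\<bar>"
proof -
  have *: "\<bar>fs z b - fs z a\<bar> \<le> 2 * (b - a)" if "a \<le> b" for a b
  proof -
    have "(-2) * (b - a) \<le> fs z b - fs z a \<and> fs z b - fs z a \<le> 2 * (b - a)"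
    proof (rule mvt_bound_pw[OF that fs_cont, where z=z and f'="\<lambda>x. K z x + hz z x - F z"])
      fix s assume "s \<noteq> z"
      then show "(fs z has_real_derivative K z s + hz z s - F z) (at s)" by (rule fs_deriv)
      show "- 2 \<le> K z s + hz z s - F z \<and> K z s + hz z s - F z \<le> 2"
        using K_le[of z s] F_nonneg[of z] F_le1[of z] by (auto simp: hz_def abs_le_iff)
    qed
    then show ?thesis by auto
  qed
  show ?thesis
  proof (cases "w \<le> s")
    case True then show ?thesis using *[OF True] by simp
  next
    case False then show ?thesis using *[of s w] by (simp add: abs_minus_commute)
  qed
qed

end

context dens begin
lemma g_mvt: "\<exists>\<xi>. min a b \<le> \<xi> \<and> \<xi> \<le> max a b \<and> g b - g a = (b - a) * deriv g \<xi>"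
proof (cases a b rule: linorder_cases)
  case less
  obtain l \<xi> where \<xi>: "a < \<xi>" "\<xi> < b" "DERIV g \<xi> :> l" and eq: "g b - g a = (b - a) * l"
    using MVT[OF less g_cont[THEN continuous_on_subset]] g_diff by blast
  have "l = deriv g \<xi>" using DERIV_unique[OF \<xi>(3) g_deriv] .
  with \<xi> eq less show ?thesis by (intro exI[of _ \<xi>]) auto
next
  case equal then show ?thesis by (intro exI[of _ a]) auto
next
  case greater
  obtain l \<xi> where \<xi>: "b < \<xi>" "\<xi> < a" "DERIV g \<xi> :> l" and eq: "g a - g b = (a - b) * l"
    using MVT[OF greater g_cont[THEN continuous_on_subset]] g_diff by blast
  have "l = deriv g \<xi>" using DERIV_unique[OF \<xi>(3) g_deriv] .
  with \<xi> eq greater show ?thesis by (intro exI[of _ \<xi>]) (auto simp: algebra_simps)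
qed

definition psi where "psi x = max c1 (c0 * \<bar>g x\<bar>)"

lemma psi_pos: "psi x > 0" using c1_pos by (simp add: psi_def)

lemma psi_cont: "continuous_on S psi"
  unfolding psi_def[abs_def] by (auto intro!: continuous_intros g_cont[THEN continuous_on_subset])

lemma fs_psi: "fs z x * psi x \<le> 1"
proof -
  have "c1 * fs z x \<le> 1" using fs_le[of z x] c1_pos by (simp add: field_simps)
  moreover have "c0 * \<bar>g x\<bar> * fs z x \<le> 1"
    using K_le[of z x] fs_nonneg[of z x] c0 by (simp add: K_def abs_mult)
  ultimately show ?thesis by (simp add: psi_def max_def mult.commute)
qed

lemma min_inv_psi: "min_inv c0 c1 g x = 1 / psi x"
proof (cases "g x = 0")
  case True then show ?thesis using c1_pos by (simp add: min_inv_def psi_def)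
next
  case False
  have pos: "c0 * \<bar>g x\<bar> > 0" using False c0 by simp
  have ab: "\<bar>c0 * g x\<bar> = c0 * \<bar>g x\<bar>" using c0 by (simp add: abs_mult)
  show ?thesis
  proof (cases "c1 \<le> c0 * \<bar>g x\<bar>")
    case True
    have "1 / (c0 * \<bar>g x\<bar>) \<le> 1 / c1" by (rule divide_left_mono) (use True c1_pos pos in auto)
    then show ?thesis using True False by (simp add: min_inv_def psi_def ab min_def max_def)
  next
    case F2: False
    have "1 / c1 \<le> 1 / (c0 * \<bar>g x\<bar>)" by (rule divide_left_mono) (use F2 c1_pos pos in auto)
    then show ?thesis using F2 False by (simp add: min_inv_def psi_def ab min_def max_def)
  qed
qed

context
  fixes c3 \<delta> :: real
  assumes H3: "\<And>x. min_inv c0 c1 g x * (\<bar>x\<bar> + 3 / c1) * (c0 * \<bar>deriv g x\<bar>) \<le> c3"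
    and small: "c1 * c3 * \<delta> \<le> 1"
begin

lemma dg_bound: "c0 * \<bar>deriv g x\<bar> \<le> c1 * c3 * psi x / 3"
proof -
  have "(1 / psi x) * (3 / c1) * (c0 * \<bar>deriv g x\<bar>) \<le> (1 / psi x) * (\<bar>x\<bar> + 3 / c1) * (c0 * \<bar>deriv g x\<bar>)"
    using psi_pos[of x] c0 by (intro mult_right_mono mult_left_mono) auto
  also have "\<dots> \<le> c3" using H3[of x] by (simp add: min_inv_psi)
  finally have "3 * (c0 * \<bar>deriv g x\<bar>) \<le> c3 * (psi x * c1)"
    using psi_pos[of x] c1_pos by (simp add: field_simps)
  then show ?thesis by (simp add: field_simps)
qed

lemma c3_nonneg: "c3 \<ge> 0"
proof -
  have "0 \<le> c0 * \<bar>deriv g 0\<bar>" using c0 by simp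
  also have "\<dots> \<le> c1 * c3 * psi 0 / 3" by (rule dg_bound)
  finally have "0 \<le> (c1 * psi 0) * c3" by (simp add: mult_ac)
  moreover have "c1 * psi 0 > 0" using c1_pos psi_pos[of 0] by simp
  ultimately show ?thesis by (simp add: zero_le_mult_iff)
qed

lemma psi_seg: assumes sw: "\<bar>s - w\<bar> \<le> \<delta>" and y: "min s w \<le> y" "y \<le> max s w"
  shows "psi y \<le> 3 / 2 * psi s"
proof -
  define I where "I = {min s w .. max s w}"
  have cI: "compact I" unfolding I_def by (rule compact_Icc)
  have nI: "I \<noteq> {}" unfolding I_def by simp
  obtain m where m: "m \<in> I" and mmax0: "\<forall>y\<in>I. psi y \<le> psi m"
    using continuous_attains_sup[OF cI nI psi_cont] by blast
  have mmax: "psi y \<le> psi m" if "y \<in> I" for y using mmax0 that by blast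
  obtain \<xi> where \<xi>: "min s m \<le> \<xi>" "\<xi> \<le> max s m" and eq: "g m - g s = (m - s) * deriv g \<xi>"
    using g_mvt by blast
  have \<xi>I: "\<xi> \<in> I" using \<xi> m by (auto simp: I_def)
  have ms: "\<bar>m - s\<bar> \<le> \<delta>" using m sw by (auto simp: I_def)
  have "c0 * \<bar>g m - g s\<bar> = \<bar>m - s\<bar> * (c0 * \<bar>deriv g \<xi>\<bar>)" using c0 by (simp add: eq abs_mult)
  also have "\<dots> \<le> \<delta> * (c1 * c3 * psi \<xi> / 3)"
    using ms dg_bound[of \<xi>] c0 by (intro mult_mono) auto
  also have "\<dots> \<le> \<delta> * (c1 * c3 * psi m / 3)"
    using mmax[OF \<xi>I] c1_pos c3_nonneg ms
    by (intro mult_left_mono divide_right_mono mult_left_mono) auto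
  also have "\<dots> = (c1 * c3 * \<delta>) * psi m / 3" by simp
  also have "\<dots> \<le> psi m / 3"
    using small psi_pos[of m] by (intro divide_right_mono) (auto intro: mult_left_le_one_le)
  finally have A1: "c0 * \<bar>g m - g s\<bar> \<le> psi m / 3" .
  have "c0 * \<bar>g m\<bar> \<le> c0 * \<bar>g s\<bar> + c0 * \<bar>g m - g s\<bar>" using c0
    by (simp add: distrib_left[symmetric] abs_triangle_ineq2_sym mult_left_mono)
  moreover have "c0 * \<bar>g s\<bar> \<le> psi s" by (simp add: psi_def)
  ultimately have gm: "c0 * \<bar>g m\<bar> \<le> psi s + psi m / 3" using A1 by linarith
  have "c1 \<le> psi s" by (simp add: psi_def)
  moreover have "0 \<le> psi m" using psi_pos[of m] by simp
  ultimately have "c1 \<le> psi s + psi m / 3" by linarith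
  with gm have "max c1 (c0 * \<bar>g m\<bar>) \<le> psi s + psi m / 3" by simp
  then have "psi m \<le> psi s + psi m / 3" by (simp add: psi_def)
  then have "psi m \<le> 3 / 2 * psi s" by simp
  moreover have "psi y \<le> psi m" using mmax y by (simp add: I_def)
  ultimately show ?thesis by simp
qed

lemma K_lip: assumes sw: "\<bar>s - w\<bar> \<le> \<delta>"
  shows "\<bar>K z s - K z w\<bar> \<le> \<bar>s - w\<bar> * (c1 * c3 / 2 + 2 * (c0 * \<bar>g w\<bar>))"
proof -
  obtain \<xi> where \<xi>: "min w s \<le> \<xi>" "\<xi> \<le> max w s" and eq: "g s - g w = (s - w) * deriv g \<xi>"
    using g_mvt by blast
  have ps: "psi \<xi> \<le> 3 / 2 * psi s" using psi_seg[OF sw] \<xi> by (simp add: min.commute max.commute)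
  have "c0 * \<bar>g s - g w\<bar> = \<bar>s - w\<bar> * (c0 * \<bar>deriv g \<xi>\<bar>)" using c0 by (simp add: eq abs_mult)
  also have "\<dots> \<le> \<bar>s - w\<bar> * (c1 * c3 * psi \<xi> / 3)" using dg_bound[of \<xi>] by (intro mult_left_mono) auto
  also have "\<dots> \<le> \<bar>s - w\<bar> * (c1 * c3 * (3 / 2 * psi s) / 3)"
    using ps c1_pos c3_nonneg by (intro mult_left_mono divide_right_mono) auto
  finally have B1: "c0 * \<bar>g s - g w\<bar> \<le> \<bar>s - w\<bar> * (c1 * c3 / 2) * psi s" by (simp add: field_simps)
  have "\<bar>c0 * (g s - g w) * fs z s\<bar> = c0 * \<bar>g s - g w\<bar> * fs z s"
    using c0 fs_nonneg[of z s] by (simp add: abs_mult)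
  also have "\<dots> \<le> \<bar>s - w\<bar> * (c1 * c3 / 2) * psi s * fs z s"
    using B1 fs_nonneg[of z s] by (rule mult_right_mono)
  also have "\<dots> = \<bar>s - w\<bar> * (c1 * c3 / 2) * (fs z s * psi s)" by simp
  also have "\<dots> \<le> \<bar>s - w\<bar> * (c1 * c3 / 2)"
    using fs_psi[of z s] c1_pos c3_nonneg by (intro mult_left_le) auto
  finally have T1: "\<bar>c0 * (g s - g w) * fs z s\<bar> \<le> \<bar>s - w\<bar> * (c1 * c3 / 2)" .
  have "\<bar>c0 * g w * (fs z s - fs z w)\<bar> = c0 * \<bar>g w\<bar> * \<bar>fs z s - fs z w\<bar>"
    using c0 by (simp add: abs_mult)
  also have "\<dots> \<le> c0 * \<bar>g w\<bar> * (2 * \<bar>s - w\<bar>)" using fs_lip c0 by (intro mult_left_mono) auto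
  finally have T2: "\<bar>c0 * g w * (fs z s - fs z w)\<bar> \<le> \<bar>s - w\<bar> * (2 * (c0 * \<bar>g w\<bar>))" by (simp add: mult_ac)
  have "K z s - K z w = c0 * (g s - g w) * fs z s + c0 * g w * (fs z s - fs z w)"
    by (simp add: K_def algebra_simps)
  then have "\<bar>K z s - K z w\<bar> \<le> \<bar>c0 * (g s - g w) * fs z s\<bar> + \<bar>c0 * g w * (fs z s - fs z w)\<bar>"
    by (simp add: abs_triangle_ineq)
  also have "\<dots> \<le> \<bar>s - w\<bar> * (c1 * c3 / 2) + \<bar>s - w\<bar> * (2 * (c0 * \<bar>g w\<bar>))" using T1 T2 by simp
  finally show ?thesis by (simp add: distrib_left)
qed

end

end


lemma (in prob_space) int_bdd_mult:
  fixes f \<phi> :: "'a \<Rightarrow> real"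
  assumes f: "integrable M f" and \<phi>: "\<phi> \<in> borel_measurable M" and bd: "AE x in M. \<bar>\<phi> x\<bar> \<le> B"
  shows "integrable M (\<lambda>x. \<phi> x * f x)"
proof (rule Bochner_Integration.integrable_bound[of M "\<lambda>x. B * f x"])
  show "integrable M (\<lambda>x. B * f x)" using f by simp
  show "(\<lambda>x. \<phi> x * f x) \<in> borel_measurable M" using \<phi> f by measurable
  show "AE x in M. norm (\<phi> x * f x) \<le> norm (B * f x)"
    using bd
  proof eventually_elim
    case (elim x)
    have "\<bar>\<phi> x\<bar> * \<bar>f x\<bar> \<le> B * \<bar>f x\<bar>" using elim by (intro mult_right_mono) auto
    also have "\<dots> \<le> \<bar>B\<bar> * \<bar>f x\<bar>" by (intro mult_right_mono) auto
    finally show ?case by (simp add: abs_mult)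
  qed
qed

locale mainloc = dens g c0 c1 N Y for g c0 c1 and N :: "'b measure" and Y +
  fixes M :: "'a measure" and W W' :: "'a \<Rightarrow> real" and r :: "real \<Rightarrow> real" and c3 \<delta> :: real
  assumes M: "prob_space M"
    and W[measurable]: "W \<in> borel_measurable M" and W'[measurable]: "W' \<in> borel_measurable M"
    and exch: "exchangeable M W W'"
    and r_meas[measurable]: "r \<in> borel_measurable borel"
    and cond: "AE \<omega> in M. real_cond_exp M (vimage_algebra (space M) W borel) (\<lambda>\<omega>. W \<omega> - W' \<omega>) \<omega>
                  = g (W \<omega>) + r (W \<omega>)"
    and H3: "\<And>x. min_inv c0 c1 g x * (\<bar>x\<bar> + 3 / c1) * (c0 * \<bar>deriv g x\<bar>) \<le> c3"
    and bdd: "AE \<omega> in M. \<bar>W \<omega> - W' \<omega>\<bar> \<le> \<delta>"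
    and small: "c1 * c3 * \<delta> \<le> 1"
    and rint: "integrable M (\<lambda>\<omega>. r (W \<omega>))"
begin

interpretation M: prob_space M by (rule M)

abbreviation S where "S \<equiv> vimage_algebra (space M) W borel"

lemma subalg: "subalgebra M S"
proof -
  have "sets S = {W -` A \<inter> space M | A. A \<in> sets borel}"
    by (rule sets_vimage_algebra2) simp
  also have "\<dots> \<subseteq> sets M" using W by (auto simp: measurable_def)
  finally show ?thesis by (simp add: subalgebra_def)
qed

interpretation fms: finite_measure_subalgebra M S
  by unfold_locales (rule subalg)

lemma meas_S: "\<phi> \<in> borel_measurable borel \<Longrightarrow> (\<lambda>\<omega>. \<phi> (W \<omega>)) \<in> borel_measurable S"
  using measurable_vimage_algebra1[of W "space M" borel] by (rule measurable_compose) simp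

lemma delta_nonneg: "0 \<le> \<delta>"
proof -
  have "AE \<omega> in M. 0 \<le> \<delta>" using bdd by eventually_elim auto
  then show ?thesis by simp
qed

lemma g_meas[measurable]: "g \<in> borel_measurable borel"
  using g_cont by (rule borel_measurable_continuous_onI)

lemma fs_meas[measurable]: "fs z \<in> borel_measurable borel"
  using fs_cont by (rule borel_measurable_continuous_onI)

lemma K_meas[measurable]: "K z \<in> borel_measurable borel"
  unfolding K_def[abs_def] by measurable

lemma hz_meas[measurable]: "hz z \<in> borel_measurable borel"
  unfolding hz_def[abs_def] by measurable

lemma D_int: "integrable M (\<lambda>\<omega>. W \<omega> - W' \<omega>)"
  by (rule M.integrable_const_bound[where B=\<delta>]) (use bdd in auto)

lemma D2_int: "integrable M (\<lambda>\<omega>. (W \<omega> - W' \<omega>)^2)"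
proof (rule M.integrable_const_bound[where B="\<delta>^2"])
  show "AE x in M. norm ((W x - W' x)^2) \<le> \<delta>^2"
    using bdd by eventually_elim (auto simp: abs_le_square_iff[symmetric] intro: power_mono)
qed simp

abbreviation CE1 where "CE1 \<equiv> real_cond_exp M S (\<lambda>\<omega>. W \<omega> - W' \<omega>)"
abbreviation CE2 where "CE2 \<equiv> real_cond_exp M S (\<lambda>\<omega>. (W \<omega> - W' \<omega>)^2)"

lemma CE1_int: "integrable M CE1" using D_int by (rule fms.real_cond_exp_int)
lemma CE2_int: "integrable M CE2" using D2_int by (rule fms.real_cond_exp_int)

lemma gW_int: "integrable M (\<lambda>\<omega>. g (W \<omega>))"
proof -
  have i: "integrable M (\<lambda>\<omega>. CE1 \<omega> - r (W \<omega>))" using CE1_int rint by simp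
  have m: "(\<lambda>\<omega>. CE1 \<omega> - r (W \<omega>)) \<in> borel_measurable M" using i by (rule borel_measurable_integrable)
  have "AE \<omega> in M. CE1 \<omega> - r (W \<omega>) = g (W \<omega>)" using cond by eventually_elim simp
  with i m show ?thesis using integrable_cong_AE[of "\<lambda>\<omega>. CE1 \<omega> - r (W \<omega>)" M "\<lambda>\<omega>. g (W \<omega>)"] by simp
qed

lemma ident1:
  assumes [measurable]: "\<phi> \<in> borel_measurable borel" and bd: "\<And>x. \<bar>\<phi> x\<bar> \<le> B"
  shows "(\<integral>\<omega>. \<phi> (W \<omega>) * (W \<omega> - W' \<omega>) \<partial>M) = (\<integral>\<omega>. \<phi> (W \<omega>) * (g (W \<omega>) + r (W \<omega>)) \<partial>M)"
proof -
  have i: "integrable M (\<lambda>\<omega>. \<phi> (W \<omega>) * (W \<omega> - W' \<omega>))"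
    by (rule M.int_bdd_mult[OF D_int]) (use bd in auto)
  have "(\<integral>\<omega>. \<phi> (W \<omega>) * (W \<omega> - W' \<omega>) \<partial>M) = (\<integral>\<omega>. \<phi> (W \<omega>) * CE1 \<omega> \<partial>M)"
    by (rule fms.real_cond_exp_intg(2)[OF i meas_S, symmetric]) simp_all
  also have "\<dots> = (\<integral>\<omega>. \<phi> (W \<omega>) * (g (W \<omega>) + r (W \<omega>)) \<partial>M)"
    by (rule integral_cong_AE) (use cond in auto)
  finally show ?thesis .
qed

lemma ident2:
  assumes [measurable]: "\<phi> \<in> borel_measurable borel" and bd: "\<And>x. \<bar>\<phi> x\<bar> \<le> B"
  shows "(\<integral>\<omega>. \<phi> (W \<omega>) * (W \<omega> - W' \<omega>)^2 \<partial>M) = (\<integral>\<omega>. \<phi> (W \<omega>) * CE2 \<omega> \<partial>M)"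
proof -
  have i: "integrable M (\<lambda>\<omega>. \<phi> (W \<omega>) * (W \<omega> - W' \<omega>)^2)"
    by (rule M.int_bdd_mult[OF D2_int]) (use bd in auto)
  show ?thesis
    by (rule fms.real_cond_exp_intg(2)[OF i meas_S, symmetric]) simp_all
qed

lemma exch_int:
  assumes [measurable]: "f \<in> borel_measurable borel" and bd: "\<And>x. \<bar>f x\<bar> \<le> B"
  shows "(\<integral>\<omega>. (W \<omega> - W' \<omega>) * f (W' \<omega>) \<partial>M) = - (\<integral>\<omega>. (W \<omega> - W' \<omega>) * f (W \<omega>) \<partial>M)"
proof -
  define \<phi> where "\<phi> = (\<lambda>(x::real, y::real). (x - y) * (f x + f y))"
  have [measurable]: "\<phi> \<in> borel_measurable (borel \<Otimes>\<^sub>M borel)" unfolding \<phi>_def by measurable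
  have "integral\<^sup>L (distr M (borel \<Otimes>\<^sub>M borel) (\<lambda>\<omega>. (W \<omega>, W' \<omega>))) \<phi>
      = integral\<^sup>L (distr M (borel \<Otimes>\<^sub>M borel) (\<lambda>\<omega>. (W' \<omega>, W \<omega>))) \<phi>"
    using exch by (simp add: exchangeable_def)
  then have "(\<integral>\<omega>. \<phi> (W \<omega>, W' \<omega>) \<partial>M) = (\<integral>\<omega>. \<phi> (W' \<omega>, W \<omega>) \<partial>M)"
    by (simp add: integral_distr)
  also have "(\<lambda>\<omega>. \<phi> (W' \<omega>, W \<omega>)) = (\<lambda>\<omega>. - \<phi> (W \<omega>, W' \<omega>))"
    by (auto simp: \<phi>_def fun_eq_iff algebra_simps)
  finally have z: "(\<integral>\<omega>. \<phi> (W \<omega>, W' \<omega>) \<partial>M) = 0" by simp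
  have i1: "integrable M (\<lambda>\<omega>. (W \<omega> - W' \<omega>) * f (W \<omega>))"
    using M.int_bdd_mult[OF D_int, of "\<lambda>\<omega>. f (W \<omega>)" B] bd by (simp add: mult.commute)
  have i2: "integrable M (\<lambda>\<omega>. (W \<omega> - W' \<omega>) * f (W' \<omega>))"
    using M.int_bdd_mult[OF D_int, of "\<lambda>\<omega>. f (W' \<omega>)" B] bd by (simp add: mult.commute)
  have "(\<integral>\<omega>. \<phi> (W \<omega>, W' \<omega>) \<partial>M) = (\<integral>\<omega>. (W \<omega> - W' \<omega>) * f (W \<omega>) + (W \<omega> - W' \<omega>) * f (W' \<omega>) \<partial>M)"
    by (simp add: \<phi>_def algebra_simps)
  also have "\<dots> = (\<integral>\<omega>. (W \<omega> - W' \<omega>) * f (W \<omega>) \<partial>M) + (\<integral>\<omega>. (W \<omega> - W' \<omega>) * f (W' \<omega>) \<partial>M)"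
    by (rule Bochner_Integration.integral_add[OF i1 i2])
  finally show ?thesis using z by linarith
qed

lemma Klip: "\<bar>s - w\<bar> \<le> \<delta> \<Longrightarrow> \<bar>K z s - K z w\<bar> \<le> \<bar>s - w\<bar> * (c1 * c3 / 2 + 2 * (c0 * \<bar>g w\<bar>))"
  by (rule K_lip[OF H3 small])

lemma c3_nn: "0 \<le> c3" by (rule c3_nonneg[OF H3 small])

lemma ptwise:
  assumes ww: "\<bar>w - w'\<bar> \<le> \<delta>"
  shows "(w - w')^2 * (K z w + hz z (w + \<delta>) - F z) - \<delta> * (w - w')^2 * (c1 * c3 / 2 + 2 * (c0 * \<bar>g w\<bar>))
           \<le> (w - w') * (fs z w - fs z w')"
    and "(w - w') * (fs z w - fs z w')
           \<le> (w - w')^2 * (K z w + hz z (w - \<delta>) - F z) + \<delta> * (w - w')^2 * (c1 * c3 / 2 + 2 * (c0 * \<bar>g w\<bar>))"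
proof -
  define L where "L = c1 * c3 / 2 + 2 * (c0 * \<bar>g w\<bar>)"
  have L0: "0 \<le> L" using c1_pos c3_nn c0 by (simp add: L_def)
  define m where "m = K z w - \<delta> * L + hz z (w + \<delta>) - F z"
  define Mx where "Mx = K z w + \<delta> * L + hz z (w - \<delta>) - F z"
  define a where "a = min w w'"
  define b where "b = max w w'"
  have ab: "a \<le> b" by (simp add: a_def b_def)
  have mv: "m * (b - a) \<le> fs z b - fs z a \<and> fs z b - fs z a \<le> Mx * (b - a)"
  proof (rule mvt_bound_pw[OF ab fs_cont, where z=z and f'="\<lambda>s. K z s + hz z s - F z"])
    fix s assume "s \<noteq> z"
    then show "(fs z has_real_derivative K z s + hz z s - F z) (at s)" by (rule fs_deriv)
  next
    fix s assume s: "a < s" "s < b"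
    have sw: "\<bar>s - w\<bar> \<le> \<delta>" using s ww by (auto simp: a_def b_def)
    have "\<bar>K z s - K z w\<bar> \<le> \<bar>s - w\<bar> * L" using Klip[OF sw] by (simp add: L_def)
    also have "\<dots> \<le> \<delta> * L" using sw L0 by (rule mult_right_mono)
    finally have kk: "\<bar>K z s - K z w\<bar> \<le> \<delta> * L" .
    have h1: "hz z (w + \<delta>) \<le> hz z s" using sw by (auto simp: hz_def)
    have h2: "hz z s \<le> hz z (w - \<delta>)" using sw by (auto simp: hz_def)
    show "m \<le> K z s + hz z s - F z \<and> K z s + hz z s - F z \<le> Mx"
      using kk h1 h2 by (auto simp: m_def Mx_def abs_le_iff)
  qed
  have prod: "(w - w') * (fs z w - fs z w') = (b - a) * (fs z b - fs z a)"
    by (cases "w' \<le> w") (auto simp: a_def b_def min_def max_def algebra_simps)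
  have sq: "(w - w')^2 = (b - a) * (b - a)"
    by (cases "w' \<le> w") (auto simp: a_def b_def min_def max_def power2_eq_square algebra_simps)
  have ba: "0 \<le> b - a" using ab by simp
  have lo: "(b - a) * (m * (b - a)) \<le> (b - a) * (fs z b - fs z a)"
    using mv ba by (intro mult_left_mono) auto
  have hi: "(b - a) * (fs z b - fs z a) \<le> (b - a) * (Mx * (b - a))"
    using mv ba by (intro mult_left_mono) auto
  have e1: "(b - a) * (m * (b - a)) = (w - w')^2 * (K z w + hz z (w + \<delta>) - F z) - \<delta> * (w - w')^2 * L"
    unfolding sq m_def by (simp add: algebra_simps)
  have e2: "(b - a) * (Mx * (b - a)) = (w - w')^2 * (K z w + hz z (w - \<delta>) - F z) + \<delta> * (w - w')^2 * L"
    unfolding sq Mx_def by (simp add: algebra_simps)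
  show "(w - w')^2 * (K z w + hz z (w + \<delta>) - F z) - \<delta> * (w - w')^2 * (c1 * c3 / 2 + 2 * (c0 * \<bar>g w\<bar>))
           \<le> (w - w') * (fs z w - fs z w')"
    using lo e1 prod by (simp add: L_def)
  show "(w - w') * (fs z w - fs z w')
           \<le> (w - w')^2 * (K z w + hz z (w - \<delta>) - F z) + \<delta> * (w - w')^2 * (c1 * c3 / 2 + 2 * (c0 * \<bar>g w\<bar>))"
    using hi e2 prod by (simp add: L_def)
qed

abbreviation V where "V \<omega> \<equiv> 1 - (c0 / 2) * CE2 \<omega>"

lemma V_int: "integrable M (\<lambda>\<omega>. V \<omega>)" using CE2_int by simp

lemma Vdecomp:
  assumes [measurable]: "\<phi> \<in> borel_measurable borel" and bd: "\<And>x. \<bar>\<phi> x\<bar> \<le> 1"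
  shows "(\<integral>\<omega>. \<phi> (W \<omega>) \<partial>M) = (\<integral>\<omega>. \<phi> (W \<omega>) * V \<omega> \<partial>M) + (c0 / 2) * (\<integral>\<omega>. \<phi> (W \<omega>) * CE2 \<omega> \<partial>M)"
    and "\<bar>\<integral>\<omega>. \<phi> (W \<omega>) * V \<omega> \<partial>M\<bar> \<le> (\<integral>\<omega>. \<bar>V \<omega>\<bar> \<partial>M)"
proof -
  have iV: "integrable M (\<lambda>\<omega>. \<phi> (W \<omega>) * V \<omega>)"
    by (rule M.int_bdd_mult[OF V_int]) (use bd in auto)
  have iC: "integrable M (\<lambda>\<omega>. \<phi> (W \<omega>) * CE2 \<omega>)"
    by (rule M.int_bdd_mult[OF CE2_int]) (use bd in auto)
  have "(\<integral>\<omega>. \<phi> (W \<omega>) \<partial>M) = (\<integral>\<omega>. \<phi> (W \<omega>) * V \<omega> + (c0 / 2) * (\<phi> (W \<omega>) * CE2 \<omega>) \<partial>M)"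
    by (simp add: algebra_simps)
  also have "\<dots> = (\<integral>\<omega>. \<phi> (W \<omega>) * V \<omega> \<partial>M) + (\<integral>\<omega>. (c0 / 2) * (\<phi> (W \<omega>) * CE2 \<omega>) \<partial>M)"
    using iV iC by (intro Bochner_Integration.integral_add) auto
  also have "(\<integral>\<omega>. (c0 / 2) * (\<phi> (W \<omega>) * CE2 \<omega>) \<partial>M) = (c0 / 2) * (\<integral>\<omega>. \<phi> (W \<omega>) * CE2 \<omega> \<partial>M)"
    by (rule integral_mult_right_zero)
  finally show "(\<integral>\<omega>. \<phi> (W \<omega>) \<partial>M) = (\<integral>\<omega>. \<phi> (W \<omega>) * V \<omega> \<partial>M) + (c0 / 2) * (\<integral>\<omega>. \<phi> (W \<omega>) * CE2 \<omega> \<partial>M)" .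
  have "\<bar>\<integral>\<omega>. \<phi> (W \<omega>) * V \<omega> \<partial>M\<bar> \<le> (\<integral>\<omega>. \<bar>\<phi> (W \<omega>) * V \<omega>\<bar> \<partial>M)"
    by (rule integral_abs_bound)
  also have "\<dots> \<le> (\<integral>\<omega>. \<bar>V \<omega>\<bar> \<partial>M)"
  proof (rule integral_mono)
    show "integrable M (\<lambda>\<omega>. \<bar>\<phi> (W \<omega>) * V \<omega>\<bar>)" using iV by simp
    show "integrable M (\<lambda>\<omega>. \<bar>V \<omega>\<bar>)" using V_int by simp
    fix \<omega> show "\<bar>\<phi> (W \<omega>) * V \<omega>\<bar> \<le> \<bar>V \<omega>\<bar>"
      using bd[of "W \<omega>"] by (simp add: abs_mult mult_left_le_one_le)
  qed
  finally show "\<bar>\<integral>\<omega>. \<phi> (W \<omega>) * V \<omega> \<partial>M\<bar> \<le> (\<integral>\<omega>. \<bar>V \<omega>\<bar> \<partial>M)" .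
qed

lemma fs_abs: "\<bar>fs z x\<bar> \<le> 1 / c1" using fs_nonneg[of z x] fs_le[of z x] by simp

lemma L_int: "integrable M (\<lambda>\<omega>. c1 * c3 / 2 + 2 * (c0 * \<bar>g (W \<omega>)\<bar>))"
  using gW_int by simp

lemma D2L_int: "integrable M (\<lambda>\<omega>. \<delta> * (W \<omega> - W' \<omega>)^2 * (c1 * c3 / 2 + 2 * (c0 * \<bar>g (W \<omega>)\<bar>)))"
  by (rule M.int_bdd_mult[OF L_int, where B="\<delta> * \<delta>^2"])
     (use bdd delta_nonneg in \<open>auto elim!: eventually_mono intro!: mult_left_mono simp: abs_mult abs_le_square_iff[symmetric] power_mono\<close>)

lemma D2L_bound: "(\<integral>\<omega>. \<delta> * (W \<omega> - W' \<omega>)^2 * (c1 * c3 / 2 + 2 * (c0 * \<bar>g (W \<omega>)\<bar>)) \<partial>M)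
   \<le> \<delta>^3 * (c1 * c3 / 2 + 2 * (\<integral>\<omega>. c0 * \<bar>g (W \<omega>)\<bar> \<partial>M))"
proof -
  have "(\<integral>\<omega>. \<delta> * (W \<omega> - W' \<omega>)^2 * (c1 * c3 / 2 + 2 * (c0 * \<bar>g (W \<omega>)\<bar>)) \<partial>M)
      \<le> (\<integral>\<omega>. \<delta>^3 * (c1 * c3 / 2 + 2 * (c0 * \<bar>g (W \<omega>)\<bar>)) \<partial>M)"
  proof (rule integral_mono_AE[OF D2L_int])
    show "integrable M (\<lambda>\<omega>. \<delta>^3 * (c1 * c3 / 2 + 2 * (c0 * \<bar>g (W \<omega>)\<bar>)))" using L_int by simp
    show "AE \<omega> in M. \<delta> * (W \<omega> - W' \<omega>)^2 * (c1 * c3 / 2 + 2 * (c0 * \<bar>g (W \<omega>)\<bar>))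
              \<le> \<delta>^3 * (c1 * c3 / 2 + 2 * (c0 * \<bar>g (W \<omega>)\<bar>))"
      using bdd
    proof eventually_elim
      case (elim \<omega>)
      have "(W \<omega> - W' \<omega>)^2 \<le> \<delta>^2" using elim by (simp add: abs_le_square_iff[symmetric] power_mono)
      then have "\<delta> * (W \<omega> - W' \<omega>)^2 \<le> \<delta>^3" using delta_nonneg
        by (metis mult_left_mono power2_eq_square power3_eq_cube mult.assoc)
      moreover have "0 \<le> c1 * c3 / 2 + 2 * (c0 * \<bar>g (W \<omega>)\<bar>)" using c1_pos c3_nn c0 by simp
      ultimately show ?case by (rule mult_right_mono)
    qed
  qed
  also have "\<dots> = \<delta>^3 * (c1 * c3 / 2 + 2 * (\<integral>\<omega>. c0 * \<bar>g (W \<omega>)\<bar> \<partial>M))"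
    using gW_int by (simp add: M.prob_space)
  finally show ?thesis .
qed

lemma i_fsW: "integrable M (\<lambda>\<omega>. (W \<omega> - W' \<omega>) * fs z (W \<omega>))"
  using M.int_bdd_mult[OF D_int, of "\<lambda>\<omega>. fs z (W \<omega>)" "1 / c1"] fs_abs by (simp add: mult.commute)

lemma i_fsW': "integrable M (\<lambda>\<omega>. (W \<omega> - W' \<omega>) * fs z (W' \<omega>))"
  using M.int_bdd_mult[OF D_int, of "\<lambda>\<omega>. fs z (W' \<omega>)" "1 / c1"] fs_abs by (simp add: mult.commute)

lemma Q_int: "integrable M (\<lambda>\<omega>. (W \<omega> - W' \<omega>) * (fs z (W \<omega>) - fs z (W' \<omega>)))"
  using Bochner_Integration.integrable_diff[OF i_fsW[of z] i_fsW'[of z]] by (simp add: algebra_simps)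

lemma commonQ:
  "(c0 / 2) * (\<integral>\<omega>. (W \<omega> - W' \<omega>) * (fs z (W \<omega>) - fs z (W' \<omega>)) \<partial>M)
     = (\<integral>\<omega>. K z (W \<omega>) \<partial>M) + c0 * (\<integral>\<omega>. fs z (W \<omega>) * r (W \<omega>) \<partial>M)"
proof -
  have ig: "integrable M (\<lambda>\<omega>. fs z (W \<omega>) * g (W \<omega>))"
    by (rule M.int_bdd_mult[OF gW_int]) (use fs_abs in auto)
  have ir: "integrable M (\<lambda>\<omega>. fs z (W \<omega>) * r (W \<omega>))"
    by (rule M.int_bdd_mult[OF rint]) (use fs_abs in auto)
  have "(\<integral>\<omega>. (W \<omega> - W' \<omega>) * (fs z (W \<omega>) - fs z (W' \<omega>)) \<partial>M)
      = (\<integral>\<omega>. (W \<omega> - W' \<omega>) * fs z (W \<omega>) - (W \<omega> - W' \<omega>) * fs z (W' \<omega>) \<partial>M)"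
    by (simp add: algebra_simps)
  also have "\<dots> = (\<integral>\<omega>. (W \<omega> - W' \<omega>) * fs z (W \<omega>) \<partial>M) - (\<integral>\<omega>. (W \<omega> - W' \<omega>) * fs z (W' \<omega>) \<partial>M)"
    by (rule Bochner_Integration.integral_diff[OF i_fsW i_fsW'])
  also have "(\<integral>\<omega>. (W \<omega> - W' \<omega>) * fs z (W' \<omega>) \<partial>M) = - (\<integral>\<omega>. (W \<omega> - W' \<omega>) * fs z (W \<omega>) \<partial>M)"
    by (rule exch_int[OF fs_meas fs_abs])
  finally have q: "(\<integral>\<omega>. (W \<omega> - W' \<omega>) * (fs z (W \<omega>) - fs z (W' \<omega>)) \<partial>M)
      = 2 * (\<integral>\<omega>. (W \<omega> - W' \<omega>) * fs z (W \<omega>) \<partial>M)" by simp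
  have "(\<integral>\<omega>. (W \<omega> - W' \<omega>) * fs z (W \<omega>) \<partial>M) = (\<integral>\<omega>. fs z (W \<omega>) * (W \<omega> - W' \<omega>) \<partial>M)"
    by (simp add: mult.commute)
  also have "\<dots> = (\<integral>\<omega>. fs z (W \<omega>) * (g (W \<omega>) + r (W \<omega>)) \<partial>M)"
    by (rule ident1[OF fs_meas fs_abs])
  also have "\<dots> = (\<integral>\<omega>. fs z (W \<omega>) * g (W \<omega>) + fs z (W \<omega>) * r (W \<omega>) \<partial>M)"
    by (simp add: algebra_simps)
  also have "\<dots> = (\<integral>\<omega>. fs z (W \<omega>) * g (W \<omega>) \<partial>M) + (\<integral>\<omega>. fs z (W \<omega>) * r (W \<omega>) \<partial>M)"
    by (rule Bochner_Integration.integral_add[OF ig ir])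
  finally have q2: "(\<integral>\<omega>. (W \<omega> - W' \<omega>) * fs z (W \<omega>) \<partial>M)
      = (\<integral>\<omega>. fs z (W \<omega>) * g (W \<omega>) \<partial>M) + (\<integral>\<omega>. fs z (W \<omega>) * r (W \<omega>) \<partial>M)" .
  have "(\<integral>\<omega>. K z (W \<omega>) \<partial>M) = (\<integral>\<omega>. c0 * (fs z (W \<omega>) * g (W \<omega>)) \<partial>M)"
    by (simp add: K_def mult_ac)
  also have "\<dots> = c0 * (\<integral>\<omega>. fs z (W \<omega>) * g (W \<omega>) \<partial>M)" by (rule integral_mult_right_zero)
  finally have k: "(\<integral>\<omega>. K z (W \<omega>) \<partial>M) = c0 * (\<integral>\<omega>. fs z (W \<omega>) * g (W \<omega>) \<partial>M)" .
  show ?thesis unfolding q q2 k by (simp add: algebra_simps)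
qed

lemma fr_bound: "\<bar>c0 * (\<integral>\<omega>. fs z (W \<omega>) * r (W \<omega>) \<partial>M)\<bar> \<le> c0 / c1 * (\<integral>\<omega>. \<bar>r (W \<omega>)\<bar> \<partial>M)"
proof -
  have ir: "integrable M (\<lambda>\<omega>. fs z (W \<omega>) * r (W \<omega>))"
    by (rule M.int_bdd_mult[OF rint]) (use fs_abs in auto)
  have "\<bar>\<integral>\<omega>. fs z (W \<omega>) * r (W \<omega>) \<partial>M\<bar> \<le> (\<integral>\<omega>. \<bar>fs z (W \<omega>) * r (W \<omega>)\<bar> \<partial>M)"
    by (rule integral_abs_bound)
  also have "\<dots> \<le> (\<integral>\<omega>. 1 / c1 * \<bar>r (W \<omega>)\<bar> \<partial>M)"
  proof (rule integral_mono)
    show "integrable M (\<lambda>\<omega>. \<bar>fs z (W \<omega>) * r (W \<omega>)\<bar>)" using ir by simp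
    show "integrable M (\<lambda>\<omega>. 1 / c1 * \<bar>r (W \<omega>)\<bar>)" using rint by simp
    fix \<omega> show "\<bar>fs z (W \<omega>) * r (W \<omega>)\<bar> \<le> 1 / c1 * \<bar>r (W \<omega>)\<bar>"
      using mult_right_mono[OF fs_abs[of z "W \<omega>"] abs_ge_zero[of "r (W \<omega>)"]] by (simp add: abs_mult)
  qed
  also have "\<dots> = 1 / c1 * (\<integral>\<omega>. \<bar>r (W \<omega>)\<bar> \<partial>M)" by (rule integral_mult_right_zero)
  finally have "c0 * \<bar>\<integral>\<omega>. fs z (W \<omega>) * r (W \<omega>) \<partial>M\<bar> \<le> c0 * (1 / c1 * (\<integral>\<omega>. \<bar>r (W \<omega>)\<bar> \<partial>M))"
    using c0 by (intro mult_left_mono) auto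
  then show ?thesis using c0 by (simp add: abs_mult)
qed

lemma integral_mono_AE_ge:
  fixes u v :: "'x \<Rightarrow> real"
  shows "integrable N' u \<Longrightarrow> integrable N' v \<Longrightarrow> AE x in N'. u x \<ge> v x \<Longrightarrow> integral\<^sup>L N' u \<ge> integral\<^sup>L N' v"
  by (rule integral_mono_AE) auto

lemma lower:
  "(\<integral>\<omega>. hz z (W \<omega> + \<delta>) \<partial>M) - F z \<le> 2 * (\<integral>\<omega>. \<bar>V \<omega>\<bar> \<partial>M) + c0 / c1 * (\<integral>\<omega>. \<bar>r (W \<omega>)\<bar> \<partial>M)
     + c0 * \<delta>^3 * (c1 * c3 / 4 + (\<integral>\<omega>. c0 * \<bar>g (W \<omega>)\<bar> \<partial>M))"
proof -
  define X2 where "X2 x = hz z (x + \<delta>) - F z" for x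
  have X2m[measurable]: "X2 \<in> borel_measurable borel" unfolding X2_def[abs_def] by measurable
  have X2b: "\<bar>X2 x\<bar> \<le> 1" for x using F_nonneg[of z] F_le1[of z] by (auto simp: X2_def hz_def)
  have Kb: "\<bar>K z x\<bar> \<le> 1" for x by (rule K_le)
  define L where "L \<omega> = c1 * c3 / 2 + 2 * (c0 * \<bar>g (W \<omega>)\<bar>)" for \<omega>
  define EQ where "EQ = (\<integral>\<omega>. (W \<omega> - W' \<omega>) * (fs z (W \<omega>) - fs z (W' \<omega>)) \<partial>M)"
  define EKC where "EKC = (\<integral>\<omega>. K z (W \<omega>) * CE2 \<omega> \<partial>M)"
  define EXC where "EXC = (\<integral>\<omega>. X2 (W \<omega>) * CE2 \<omega> \<partial>M)"
  define ED2L where "ED2L = (\<integral>\<omega>. \<delta> * (W \<omega> - W' \<omega>)^2 * (c1 * c3 / 2 + 2 * (c0 * \<bar>g (W \<omega>)\<bar>)) \<partial>M)"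
  define EK where "EK = (\<integral>\<omega>. K z (W \<omega>) \<partial>M)"
  define EXX where "EXX = (\<integral>\<omega>. X2 (W \<omega>) \<partial>M)"
  define EKV where "EKV = (\<integral>\<omega>. K z (W \<omega>) * V \<omega> \<partial>M)"
  define EXV where "EXV = (\<integral>\<omega>. X2 (W \<omega>) * V \<omega> \<partial>M)"
  define Efr where "Efr = (\<integral>\<omega>. fs z (W \<omega>) * r (W \<omega>) \<partial>M)"
  define Er where "Er = (\<integral>\<omega>. \<bar>r (W \<omega>)\<bar> \<partial>M)"
  define Eg where "Eg = (\<integral>\<omega>. c0 * \<bar>g (W \<omega>)\<bar> \<partial>M)"
  define AA where "AA = (\<integral>\<omega>. \<bar>V \<omega>\<bar> \<partial>M)"
  have iKD: "integrable M (\<lambda>\<omega>. K z (W \<omega>) * (W \<omega> - W' \<omega>)^2)"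
    by (rule M.int_bdd_mult[OF D2_int]) (use Kb in auto)
  have iXD: "integrable M (\<lambda>\<omega>. X2 (W \<omega>) * (W \<omega> - W' \<omega>)^2)"
    by (rule M.int_bdd_mult[OF D2_int]) (use X2b in auto)
  have pt: "AE \<omega> in M. K z (W \<omega>) * (W \<omega> - W' \<omega>)^2 + X2 (W \<omega>) * (W \<omega> - W' \<omega>)^2
      - \<delta> * (W \<omega> - W' \<omega>)^2 * (c1 * c3 / 2 + 2 * (c0 * \<bar>g (W \<omega>)\<bar>))
      \<le> (W \<omega> - W' \<omega>) * (fs z (W \<omega>) - fs z (W' \<omega>))"
    using bdd
  proof eventually_elim
    case (elim \<omega>)
    note pw = ptwise(1)[OF elim, of z]
    have "K z (W \<omega>) * (W \<omega> - W' \<omega>)^2 + X2 (W \<omega>) * (W \<omega> - W' \<omega>)^2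
      = (W \<omega> - W' \<omega>)^2 * (K z (W \<omega>) + hz z (W \<omega> + \<delta>) - F z)"
      by (simp add: X2_def algebra_simps)
    then show ?case using pw by linarith
  qed
  have mono: "(\<integral>\<omega>. K z (W \<omega>) * (W \<omega> - W' \<omega>)^2 + X2 (W \<omega>) * (W \<omega> - W' \<omega>)^2
      - \<delta> * (W \<omega> - W' \<omega>)^2 * (c1 * c3 / 2 + 2 * (c0 * \<bar>g (W \<omega>)\<bar>)) \<partial>M) \<le> EQ"
    unfolding EQ_def
    by (rule integral_mono_AE[OF _ _ pt]) (use iKD iXD D2L_int Q_int in auto)
  have split: "(\<integral>\<omega>. K z (W \<omega>) * (W \<omega> - W' \<omega>)^2 + X2 (W \<omega>) * (W \<omega> - W' \<omega>)^2
      - \<delta> * (W \<omega> - W' \<omega>)^2 * (c1 * c3 / 2 + 2 * (c0 * \<bar>g (W \<omega>)\<bar>)) \<partial>M)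
      = (\<integral>\<omega>. K z (W \<omega>) * (W \<omega> - W' \<omega>)^2 \<partial>M) + (\<integral>\<omega>. X2 (W \<omega>) * (W \<omega> - W' \<omega>)^2 \<partial>M) - ED2L"
    unfolding ED2L_def
    using iKD iXD D2L_int by (simp add: Bochner_Integration.integral_diff Bochner_Integration.integral_add)
  have idK: "(\<integral>\<omega>. K z (W \<omega>) * (W \<omega> - W' \<omega>)^2 \<partial>M) = EKC"
    unfolding EKC_def by (rule ident2[OF K_meas Kb])
  have idX: "(\<integral>\<omega>. X2 (W \<omega>) * (W \<omega> - W' \<omega>)^2 \<partial>M) = EXC"
    unfolding EXC_def by (rule ident2[OF X2m X2b])
  have vK: "EK = EKV + (c0 / 2) * EKC" "\<bar>EKV\<bar> \<le> AA"
    unfolding EK_def EKV_def EKC_def AA_def using Vdecomp[OF K_meas Kb] by auto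
  have vX: "EXX = EXV + (c0 / 2) * EXC" "\<bar>EXV\<bar> \<le> AA"
    unfolding EXX_def EXV_def EXC_def AA_def using Vdecomp[OF X2m X2b] by auto
  have cq: "(c0 / 2) * EQ = EK + c0 * Efr" unfolding EQ_def EK_def Efr_def by (rule commonQ)
  have fr: "\<bar>c0 * Efr\<bar> \<le> c0 / c1 * Er" unfolding Efr_def Er_def by (rule fr_bound)
  have dl: "ED2L \<le> \<delta>^3 * (c1 * c3 / 2 + 2 * Eg)" unfolding ED2L_def Eg_def by (rule D2L_bound)
  have dl2: "(c0 / 2) * ED2L \<le> c0 * \<delta>^3 * (c1 * c3 / 4 + Eg)"
  proof -
    have "(c0 / 2) * ED2L \<le> (c0 / 2) * (\<delta>^3 * (c1 * c3 / 2 + 2 * Eg))" using dl c0 by (intro mult_left_mono) auto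
    also have "\<dots> = c0 * \<delta>^3 * (c1 * c3 / 4 + Eg)" by (simp add: algebra_simps)
    finally show ?thesis .
  qed
  have m: "(c0 / 2) * (EKC + EXC - ED2L) \<le> (c0 / 2) * EQ"
    using mono split idK idX c0 by (intro mult_left_mono) auto
  then have m': "(c0 / 2) * EKC + (c0 / 2) * EXC - (c0 / 2) * ED2L \<le> (c0 / 2) * EQ" by (simp add: algebra_simps)
  have hint: "integrable M (\<lambda>\<omega>. hz z (W \<omega> + \<delta>))"
    by (rule M.integrable_const_bound[where B=1]) (auto simp: hz_def)
  have ex: "EXX = (\<integral>\<omega>. hz z (W \<omega> + \<delta>) \<partial>M) - F z"
    unfolding EXX_def X2_def using hint by (simp add: Bochner_Integration.integral_diff M.prob_space)
  show ?thesis
    using vK vX cq fr dl2 m' ex unfolding AA_def[symmetric] Er_def[symmetric] Eg_def[symmetric]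
    by (auto simp: abs_le_iff)
qed

lemma upper:
  "F z - (\<integral>\<omega>. hz z (W \<omega> - \<delta>) \<partial>M) \<le> 2 * (\<integral>\<omega>. \<bar>V \<omega>\<bar> \<partial>M) + c0 / c1 * (\<integral>\<omega>. \<bar>r (W \<omega>)\<bar> \<partial>M)
     + c0 * \<delta>^3 * (c1 * c3 / 4 + (\<integral>\<omega>. c0 * \<bar>g (W \<omega>)\<bar> \<partial>M))"
proof -
  define X2 where "X2 x = hz z (x - \<delta>) - F z" for x
  have X2m[measurable]: "X2 \<in> borel_measurable borel" unfolding X2_def[abs_def] by measurable
  have X2b: "\<bar>X2 x\<bar> \<le> 1" for x using F_nonneg[of z] F_le1[of z] by (auto simp: X2_def hz_def)
  have Kb: "\<bar>K z x\<bar> \<le> 1" for x by (rule K_le)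
  define L where "L \<omega> = c1 * c3 / 2 + 2 * (c0 * \<bar>g (W \<omega>)\<bar>)" for \<omega>
  define EQ where "EQ = (\<integral>\<omega>. (W \<omega> - W' \<omega>) * (fs z (W \<omega>) - fs z (W' \<omega>)) \<partial>M)"
  define EKC where "EKC = (\<integral>\<omega>. K z (W \<omega>) * CE2 \<omega> \<partial>M)"
  define EXC where "EXC = (\<integral>\<omega>. X2 (W \<omega>) * CE2 \<omega> \<partial>M)"
  define ED2L where "ED2L = (\<integral>\<omega>. \<delta> * (W \<omega> - W' \<omega>)^2 * (c1 * c3 / 2 + 2 * (c0 * \<bar>g (W \<omega>)\<bar>)) \<partial>M)"
  define EK where "EK = (\<integral>\<omega>. K z (W \<omega>) \<partial>M)"
  define EXX where "EXX = (\<integral>\<omega>. X2 (W \<omega>) \<partial>M)"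
  define EKV where "EKV = (\<integral>\<omega>. K z (W \<omega>) * V \<omega> \<partial>M)"
  define EXV where "EXV = (\<integral>\<omega>. X2 (W \<omega>) * V \<omega> \<partial>M)"
  define Efr where "Efr = (\<integral>\<omega>. fs z (W \<omega>) * r (W \<omega>) \<partial>M)"
  define Er where "Er = (\<integral>\<omega>. \<bar>r (W \<omega>)\<bar> \<partial>M)"
  define Eg where "Eg = (\<integral>\<omega>. c0 * \<bar>g (W \<omega>)\<bar> \<partial>M)"
  define AA where "AA = (\<integral>\<omega>. \<bar>V \<omega>\<bar> \<partial>M)"
  have iKD: "integrable M (\<lambda>\<omega>. K z (W \<omega>) * (W \<omega> - W' \<omega>)^2)"
    by (rule M.int_bdd_mult[OF D2_int]) (use Kb in auto)
  have iXD: "integrable M (\<lambda>\<omega>. X2 (W \<omega>) * (W \<omega> - W' \<omega>)^2)"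
    by (rule M.int_bdd_mult[OF D2_int]) (use X2b in auto)
  have pt: "AE \<omega> in M. K z (W \<omega>) * (W \<omega> - W' \<omega>)^2 + X2 (W \<omega>) * (W \<omega> - W' \<omega>)^2
      + \<delta> * (W \<omega> - W' \<omega>)^2 * (c1 * c3 / 2 + 2 * (c0 * \<bar>g (W \<omega>)\<bar>))
      \<ge> (W \<omega> - W' \<omega>) * (fs z (W \<omega>) - fs z (W' \<omega>))"
    using bdd
  proof eventually_elim
    case (elim \<omega>)
    note pw = ptwise(2)[OF elim, of z]
    have "K z (W \<omega>) * (W \<omega> - W' \<omega>)^2 + X2 (W \<omega>) * (W \<omega> - W' \<omega>)^2
      = (W \<omega> - W' \<omega>)^2 * (K z (W \<omega>) + hz z (W \<omega> - \<delta>) - F z)"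
      by (simp add: X2_def algebra_simps)
    then show ?case using pw by linarith
  qed
  have mono: "(\<integral>\<omega>. K z (W \<omega>) * (W \<omega> - W' \<omega>)^2 + X2 (W \<omega>) * (W \<omega> - W' \<omega>)^2
      + \<delta> * (W \<omega> - W' \<omega>)^2 * (c1 * c3 / 2 + 2 * (c0 * \<bar>g (W \<omega>)\<bar>)) \<partial>M) \<ge> EQ"
    unfolding EQ_def
    by (rule integral_mono_AE_ge[OF _ _ pt]) (use iKD iXD D2L_int Q_int in auto)
  have split: "(\<integral>\<omega>. K z (W \<omega>) * (W \<omega> - W' \<omega>)^2 + X2 (W \<omega>) * (W \<omega> - W' \<omega>)^2
      + \<delta> * (W \<omega> - W' \<omega>)^2 * (c1 * c3 / 2 + 2 * (c0 * \<bar>g (W \<omega>)\<bar>)) \<partial>M)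
      = (\<integral>\<omega>. K z (W \<omega>) * (W \<omega> - W' \<omega>)^2 \<partial>M) + (\<integral>\<omega>. X2 (W \<omega>) * (W \<omega> - W' \<omega>)^2 \<partial>M) + ED2L"
    unfolding ED2L_def
    using iKD iXD D2L_int by (simp add: Bochner_Integration.integral_diff Bochner_Integration.integral_add)
  have idK: "(\<integral>\<omega>. K z (W \<omega>) * (W \<omega> - W' \<omega>)^2 \<partial>M) = EKC"
    unfolding EKC_def by (rule ident2[OF K_meas Kb])
  have idX: "(\<integral>\<omega>. X2 (W \<omega>) * (W \<omega> - W' \<omega>)^2 \<partial>M) = EXC"
    unfolding EXC_def by (rule ident2[OF X2m X2b])
  have vK: "EK = EKV + (c0 / 2) * EKC" "\<bar>EKV\<bar> \<le> AA"
    unfolding EK_def EKV_def EKC_def AA_def using Vdecomp[OF K_meas Kb] by auto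
  have vX: "EXX = EXV + (c0 / 2) * EXC" "\<bar>EXV\<bar> \<le> AA"
    unfolding EXX_def EXV_def EXC_def AA_def using Vdecomp[OF X2m X2b] by auto
  have cq: "(c0 / 2) * EQ = EK + c0 * Efr" unfolding EQ_def EK_def Efr_def by (rule commonQ)
  have fr: "\<bar>c0 * Efr\<bar> \<le> c0 / c1 * Er" unfolding Efr_def Er_def by (rule fr_bound)
  have dl: "ED2L \<le> \<delta>^3 * (c1 * c3 / 2 + 2 * Eg)" unfolding ED2L_def Eg_def by (rule D2L_bound)
  have dl2: "(c0 / 2) * ED2L \<le> c0 * \<delta>^3 * (c1 * c3 / 4 + Eg)"
  proof -
    have "(c0 / 2) * ED2L \<le> (c0 / 2) * (\<delta>^3 * (c1 * c3 / 2 + 2 * Eg))" using dl c0 by (intro mult_left_mono) auto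
    also have "\<dots> = c0 * \<delta>^3 * (c1 * c3 / 4 + Eg)" by (simp add: algebra_simps)
    finally show ?thesis .
  qed
  have m: "(c0 / 2) * (EKC + EXC + ED2L) \<ge> (c0 / 2) * EQ"
    using mono split idK idX c0 by (intro mult_left_mono) auto
  then have m': "(c0 / 2) * EKC + (c0 / 2) * EXC + (c0 / 2) * ED2L \<ge> (c0 / 2) * EQ" by (simp add: algebra_simps)
  have hint: "integrable M (\<lambda>\<omega>. hz z (W \<omega> - \<delta>))"
    by (rule M.integrable_const_bound[where B=1]) (auto simp: hz_def)
  have ex: "EXX = (\<integral>\<omega>. hz z (W \<omega> - \<delta>) \<partial>M) - F z"
    unfolding EXX_def X2_def using hint by (simp add: Bochner_Integration.integral_diff M.prob_space)
  show ?thesis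
    using vK vX cq fr dl2 m' ex unfolding AA_def[symmetric] Er_def[symmetric] Eg_def[symmetric]
    by (auto simp: abs_le_iff)
qed

lemma F_lip: "a \<le> b \<Longrightarrow> F b - F a \<le> c1 * (b - a)"
  using mvt_bound[of a b F p 0 c1] F_cont F_deriv p_pos p_le by (auto intro: less_imp_le)

lemma P_int: "(\<integral>\<omega>. hz z (W \<omega>) \<partial>M) = measure M {\<omega> \<in> space M. W \<omega> \<le> z}"
proof -
  have "(\<integral>\<omega>. hz z (W \<omega>) \<partial>M) = (\<integral>\<omega>. indicator {\<omega> \<in> space M. W \<omega> \<le> z} \<omega> \<partial>M)"
    by (rule Bochner_Integration.integral_cong) (auto simp: hz_def indicator_def)
  also have "\<dots> = measure M {\<omega> \<in> space M. W \<omega> \<le> z}"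
    by (simp add: Int_absorb2 subset_eq)
  finally show ?thesis .
qed

lemma final_real:
  "\<bar>measure M {\<omega> \<in> space M. W \<omega> \<le> z} - F z\<bar> \<le> 2 * (\<integral>\<omega>. \<bar>V \<omega>\<bar> \<partial>M) + c1 * \<delta> + c0 / c1 * (\<integral>\<omega>. \<bar>r (W \<omega>)\<bar> \<partial>M)
     + c0 * \<delta>^3 * (c1 * c3 / 4 + (\<integral>\<omega>. c0 * \<bar>g (W \<omega>)\<bar> \<partial>M))"
proof -
  have l: "(\<integral>\<omega>. hz (z + \<delta>) (W \<omega> + \<delta>) \<partial>M) = measure M {\<omega> \<in> space M. W \<omega> \<le> z}"
    unfolding P_int[symmetric] by (simp add: hz_def)
  have u: "(\<integral>\<omega>. hz (z - \<delta>) (W \<omega> - \<delta>) \<partial>M) = measure M {\<omega> \<in> space M. W \<omega> \<le> z}"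
    unfolding P_int[symmetric] by (simp add: hz_def)
  have f1: "F (z + \<delta>) - F z \<le> c1 * \<delta>" using F_lip[of z "z + \<delta>"] delta_nonneg by simp
  have f2: "F z - F (z - \<delta>) \<le> c1 * \<delta>" using F_lip[of "z - \<delta>" z] delta_nonneg by simp
  show ?thesis using lower[of "z + \<delta>"] upper[of "z - \<delta>"] l u f1 f2 by (simp add: abs_le_iff)
qed

end


theorem theorem1p2:
  fixes M :: "'a measure" and N :: "'b measure"
    and W W' :: "'a \<Rightarrow> real" and Y :: "'b \<Rightarrow> real"
    and g r :: "real \<Rightarrow> real" and c0 c1 c3 \<delta> :: real
  assumes M: "prob_space M"
    and W: "W \<in> borel_measurable M" and W': "W' \<in> borel_measurable M"
    and exch: "exchangeable M W W'"
    and g_diff: "\<And>x. g differentiable (at x)"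
    and r_meas: "r \<in> borel_measurable borel"
    and cond: "AE \<omega> in M. real_cond_exp M (vimage_algebra (space M) W borel) (\<lambda>\<omega>. W \<omega> - W' \<omega>) \<omega>
                  = g (W \<omega>) + r (W \<omega>)"
    and c0: "c0 > 0"
    and int_fin: "integrable lborel (\<lambda>t. exp (- c0 * Gfun g t))"
    and c1: "c1 = 1 / (\<integral>t. exp (- c0 * Gfun g t) \<partial>lborel)"
    and N: "prob_space N"
    and Y: "distributed N lborel Y (\<lambda>t. ennreal (c1 * exp (- c0 * Gfun g t)))"
    and H1: "mono g" "\<And>t. t > 0 \<Longrightarrow> g t \<ge> 0" "\<And>t. t \<le> 0 \<Longrightarrow> g t \<le> 0"
    and H3: "\<And>x. min_inv c0 c1 g x * (\<bar>x\<bar> + 3 / c1) * (c0 * \<bar>deriv g x\<bar>) \<le> c3"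
    and bdd: "AE \<omega> in M. \<bar>W \<omega> - W' \<omega>\<bar> \<le> \<delta>"
  shows "ennreal \<bar>measure M {\<omega> \<in> space M. W \<omega> \<le> z} - measure N {y \<in> space N. Y y \<le> z}\<bar>
    \<le> 3 * (\<integral>\<^sup>+ \<omega>. ennreal \<bar>1 - (c0 / 2) *
              real_cond_exp M (vimage_algebra (space M) W borel) (\<lambda>\<omega>. (W \<omega> - W' \<omega>)\<^sup>2) \<omega>\<bar> \<partial>M)
      + ennreal (c1 * max 1 c3 * \<delta>)
      + ennreal (2 * c0 / c1) * (\<integral>\<^sup>+ \<omega>. ennreal \<bar>r (W \<omega>)\<bar> \<partial>M)
      + ennreal (\<delta> ^ 3 * c0) * (ennreal (2 + c3 / 2) * (\<integral>\<^sup>+ \<omega>. ennreal \<bar>c0 * g (W \<omega>)\<bar> \<partial>M)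
                                  + ennreal (c1 * c3 / 2))"
proof -
  interpret d: dens g c0 c1 N Y
    by (rule dens.intro[OF g_diff H1(1) H1(2) H1(3) c0 int_fin c1 N Y])
  interpret M: prob_space M by (rule M)
  define A' where "A' = (\<integral>\<^sup>+ \<omega>. ennreal \<bar>1 - (c0 / 2) *
              real_cond_exp M (vimage_algebra (space M) W borel) (\<lambda>\<omega>. (W \<omega> - W' \<omega>)\<^sup>2) \<omega>\<bar> \<partial>M)"
  define R' where "R' = (\<integral>\<^sup>+ \<omega>. ennreal \<bar>r (W \<omega>)\<bar> \<partial>M)"
  define G' where "G' = (\<integral>\<^sup>+ \<omega>. ennreal \<bar>c0 * g (W \<omega>)\<bar> \<partial>M)"
  define P where "P = measure M {\<omega> \<in> space M. W \<omega> \<le> z}"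
  have FN: "measure N {y \<in> space N. Y y \<le> z} = d.F z" by (simp add: d.F_def)
  have c1p: "c1 > 0" by (rule d.c1_pos)
  have c3p: "0 \<le> c3" using d.c3_nonneg[of c3 0] H3 by simp
  have dp: "0 \<le> \<delta>"
  proof -
    have "AE \<omega> in M. 0 \<le> \<delta>" using bdd by eventually_elim auto
    then show ?thesis by simp
  qed
  have "0 \<le> P" "P \<le> 1" by (simp_all add: P_def)
  then have lhs1: "\<bar>P - d.F z\<bar> \<le> 1"
    using d.F_nonneg[of z] d.F_le1[of z] by (auto simp: abs_le_iff)
  have main: "ennreal \<bar>P - d.F z\<bar> \<le> 3 * A' + ennreal (c1 * max 1 c3 * \<delta>) + ennreal (2 * c0 / c1) * R'
        + ennreal (\<delta> ^ 3 * c0) * (ennreal (2 + c3 / 2) * G' + ennreal (c1 * c3 / 2))"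
  proof (cases "1 \<le> c1 * max 1 c3 * \<delta>")
    case True
    have "ennreal \<bar>P - d.F z\<bar> \<le> ennreal (c1 * max 1 c3 * \<delta>)" using lhs1 True by (intro ennreal_leI) simp
    also have "\<dots> \<le> 3 * A' + ennreal (c1 * max 1 c3 * \<delta>)" by simp
    also have "\<dots> \<le> 3 * A' + ennreal (c1 * max 1 c3 * \<delta>) + ennreal (2 * c0 / c1) * R'" by simp
    also have "\<dots> \<le> 3 * A' + ennreal (c1 * max 1 c3 * \<delta>) + ennreal (2 * c0 / c1) * R'
        + ennreal (\<delta> ^ 3 * c0) * (ennreal (2 + c3 / 2) * G' + ennreal (c1 * c3 / 2))" by simp
    finally show ?thesis .
  next
    case False
    then have smallm: "c1 * max 1 c3 * \<delta> < 1" by simp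
    show ?thesis
    proof (cases "integrable M (\<lambda>\<omega>. r (W \<omega>))")
      case False
      have meas: "(\<lambda>\<omega>. r (W \<omega>)) \<in> borel_measurable M" using r_meas W by measurable
      have "\<not> (\<integral>\<^sup>+ \<omega>. ennreal (norm (r (W \<omega>))) \<partial>M) < \<infinity>"
        using False meas by (simp add: integrable_iff_bounded)
      then have R'top: "R' = \<top>" unfolding R'_def real_norm_def by (metis less_top infinity_ennreal_def)
      have "ennreal (2 * c0 / c1) \<noteq> 0" using c0 c1p by simp
      then have "ennreal (2 * c0 / c1) * R' = \<top>" using R'top by (simp add: ennreal_mult_eq_top_iff)
      then show ?thesis by simp
    next
      case True
      have small: "c1 * c3 * \<delta> \<le> 1"
      proof -
        have "c1 * c3 * \<delta> \<le> c1 * max 1 c3 * \<delta>" using c1p dp by (intro mult_right_mono mult_left_mono) auto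
        then show ?thesis using smallm by simp
      qed
      interpret mm: mainloc g c0 c1 N Y M W W' r c3 \<delta>
        by (rule mainloc.intro[OF d.dens_axioms mainloc_axioms.intro[OF M W W' exch r_meas cond H3 bdd small True]])
      define AA where "AA = (\<integral>\<omega>. \<bar>1 - (c0 / 2) * real_cond_exp M (vimage_algebra (space M) W borel) (\<lambda>\<omega>. (W \<omega> - W' \<omega>)\<^sup>2) \<omega>\<bar> \<partial>M)"
      define Er where "Er = (\<integral>\<omega>. \<bar>r (W \<omega>)\<bar> \<partial>M)"
      define Eg where "Eg = (\<integral>\<omega>. c0 * \<bar>g (W \<omega>)\<bar> \<partial>M)"
      have AA0: "0 \<le> AA" by (simp add: AA_def)
      have Er0: "0 \<le> Er" by (simp add: Er_def)
      have Eg0: "0 \<le> Eg" using c0 by (simp add: Eg_def)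
      have fr: "\<bar>P - d.F z\<bar> \<le> 2 * AA + c1 * \<delta> + c0 / c1 * Er + c0 * \<delta>^3 * (c1 * c3 / 4 + Eg)"
        using mm.final_real[of z] by (simp add: P_def AA_def Er_def Eg_def)
      have r1: "2 * AA \<le> 3 * AA" using AA0 by simp
      have r2: "c1 * \<delta> \<le> c1 * max 1 c3 * \<delta>"
        using c1p dp by (intro mult_right_mono) (auto intro: order.trans[of _ "c1 * 1"])
      have "c0 / c1 \<le> 2 * c0 / c1" using c0 c1p by (intro divide_right_mono) auto
      then have r3: "c0 / c1 * Er \<le> 2 * c0 / c1 * Er" using Er0 by (rule mult_right_mono)
      have r4: "c0 * \<delta>^3 * (c1 * c3 / 4 + Eg) \<le> \<delta> ^ 3 * c0 * ((2 + c3 / 2) * Eg + c1 * c3 / 2)"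
      proof -
        have "c1 * c3 / 4 + Eg \<le> (2 + c3 / 2) * Eg + c1 * c3 / 2"
          using c1p c3p Eg0 by (simp add: algebra_simps mult_nonneg_nonneg)
        then have "c0 * \<delta>^3 * (c1 * c3 / 4 + Eg) \<le> c0 * \<delta>^3 * ((2 + c3 / 2) * Eg + c1 * c3 / 2)"
          using c0 dp by (intro mult_left_mono) auto
        then show ?thesis by (simp add: mult_ac)
      qed
      have real_ineq: "\<bar>P - d.F z\<bar> \<le> 3 * AA + c1 * max 1 c3 * \<delta> + 2 * c0 / c1 * Er
          + \<delta> ^ 3 * c0 * ((2 + c3 / 2) * Eg + c1 * c3 / 2)"
        using fr r1 r2 r3 r4 by linarith
      have A'eq: "A' = ennreal AA"
        unfolding A'_def AA_def using mm.V_int by (intro nn_integral_eq_integral) auto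
      have R'eq: "R' = ennreal Er"
        unfolding R'_def Er_def using True by (intro nn_integral_eq_integral) auto
      have G'eq: "G' = ennreal Eg"
      proof -
        have "G' = (\<integral>\<^sup>+ \<omega>. ennreal (c0 * \<bar>g (W \<omega>)\<bar>) \<partial>M)"
          unfolding G'_def using c0 by (simp add: abs_mult)
        also have "\<dots> = ennreal Eg"
          unfolding Eg_def using mm.gW_int c0 by (intro nn_integral_eq_integral) auto
        finally show ?thesis .
      qed
      have n1: "0 \<le> c1 * max 1 c3 * \<delta>" using c1p dp by simp
      have n2: "0 \<le> 2 * c0 / c1 * Er" using c0 c1p Er0 by simp
      have n3: "0 \<le> \<delta> ^ 3 * c0" using c0 dp by simp
      have n4: "0 \<le> (2 + c3 / 2) * Eg" using c3p Eg0 by simp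
      have n5: "0 \<le> c1 * c3 / 2" using c1p c3p by simp
      have n6: "0 \<le> \<delta> ^ 3 * c0 * ((2 + c3 / 2) * Eg + c1 * c3 / 2)" using n3 n4 n5 by simp
      have "ennreal \<bar>P - d.F z\<bar> \<le> ennreal (3 * AA + c1 * max 1 c3 * \<delta> + 2 * c0 / c1 * Er
          + \<delta> ^ 3 * c0 * ((2 + c3 / 2) * Eg + c1 * c3 / 2))"
        using real_ineq by (rule ennreal_leI)
      also have "\<dots> = ennreal (3 * AA) + ennreal (c1 * max 1 c3 * \<delta>) + ennreal (2 * c0 / c1 * Er)
          + ennreal (\<delta> ^ 3 * c0 * ((2 + c3 / 2) * Eg + c1 * c3 / 2))"
        using AA0 n1 n2 n6 by (simp add: ennreal_plus)
      also have "ennreal (3 * AA) = 3 * ennreal AA" using AA0 by (simp add: ennreal_mult)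
      also have "ennreal (2 * c0 / c1 * Er) = ennreal (2 * c0 / c1) * ennreal Er"
        by (rule ennreal_mult) (use c0 c1p Er0 in auto)
      also have "ennreal (\<delta> ^ 3 * c0 * ((2 + c3 / 2) * Eg + c1 * c3 / 2))
          = ennreal (\<delta> ^ 3 * c0) * (ennreal (2 + c3 / 2) * ennreal Eg + ennreal (c1 * c3 / 2))"
        using n3 n4 n5 c3p Eg0 by (simp add: ennreal_mult ennreal_plus)
      finally show ?thesis unfolding A'eq R'eq G'eq .
    qed
  qed
  then show ?thesis unfolding P_def FN[symmetric] A'_def R'_def G'_def .
qed


end
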